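(* Let $r=a/b$ with $a,b$ coprime positive integers. Then the X-ray transform $I_r$ (extended to a bounded operator on $L^2(\overline{\mathbb{H}})$) preserves the orthogonal decomposition $L^2(\overline{\mathbb{H}})= L^2(\mathbb{C})\oplus {}^0L^2(\overline{\mathbb{H}})$, i.e. $I_r$ maps $L^2(\mathbb{C})$ into $L^2(\mathbb{C})$ and ${}^0L^2(\overline{\mathbb{H}})$ into ${}^0L^2(\overline{\mathbb{H}})$.
   Context: The Heisenberg group is $\mathbb{H}=\mathbb{C}\times\mathbb{R}$ with product $(x+iy,t)(u+iv,s)=(x+u+i(y+v),\,t+s+\tfrac12(xv-yu))$. The reduced Heisenberg group is $\overline{\mathbb{H}}=\mathbb{H}/\Gamma$, $\Gamma=\{(0,k\pi):k\in\mathbb{Z}\}$, identified with $\mathbb{C}\times(\mathbb{R}/\pi\mathbb{Z})$ and equipped with Lebesgue measure. For $r=a/b$ ($a,b$ coprime positive integers) let $\gamma_r(s)=(\sqrt r e^{is/\sqrt r},\tfrac12\sqrt r s)\in\overline{\mathbb{H}}$ and define, for $f\in C_c^\infty(\overline{\mathbb{H}})$, $I_rf(z,t)=\int_0^{2\pi\sqrt{ab}}f((z,t)\gamma_r(s))\,ds$; this extends to a bounded operator on $L^2(\overline{\mathbb{H}})$. Here $L^2(\mathbb{C})$ is identified with $\{f\in L^2(\overline{\mathbb{H}}): f(z,t)=f(z,0)\ \forall (z,t)\}$ and ${}^0L^2(\overline{\mathbb{H}})=\{f\in L^2(\overline{\mathbb{H}}):\int_0^\pi f(z,t)\,dt=0\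 \forall z\in\mathbb{C}\}$. *)

theory Defs
  imports "HOL-Analysis.Analysis"
begin

text \<open>Functions on the reduced Heisenberg group are represented by functions on
  complex \<times> real that are periodic with period pi in the second variable.\<close>

type_synonym hpt = "complex \<times> real"

definition hmul :: "hpt \<Rightarrow> hpt \<Rightarrow> hpt" where
  "hmul p q = (fst p + fst q,
     snd p + snd q + (1/2) * (Re (fst p) * Im (fst q) - Im (fst p) * Re (fst q)))"

definition gamma_r :: "real \<Rightarrow> real \<Rightarrow> hpt" where
  "gamma_r r s = (complex_of_real (sqrt r) * exp (\<i> * complex_of_real (s / sqrt r)),
                  (1/2) * sqrt r * s)"

definition xray :: "nat \<Rightarrow> nat \<Rightarrow> (hpt \<Rightarrow> complex) \<Rightarrow> hpt \<Rightarrow> complex" where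
  "xray a b f p =
     (LINT s:{0..2 * pi * sqrt (real a * real b)}|lborel.
        f (hmul p (gamma_r (real a / real b) s)))"

definition pi_periodic :: "(hpt \<Rightarrow> 'b) \<Rightarrow> bool" where
  "pi_periodic f \<longleftrightarrow> (\<forall>z t. f (z, t + pi) = f (z, t))"

definition fdom :: "hpt set" where
  "fdom = UNIV \<times> {0..<pi}"

coinductive smooth_fun :: "('a::real_normed_vector \<Rightarrow> 'b::real_normed_vector) \<Rightarrow> bool" where
  "(\<forall>x. f differentiable (at x)) \<Longrightarrow>
   (\<forall>v. smooth_fun (\<lambda>x. frechet_derivative f (at x) v)) \<Longrightarrow> smooth_fun f"

definition Cc_inf :: "(hpt \<Rightarrow> complex) set" where
  "Cc_inf = {f. smooth_fun f \<and> pi_periodic f \<and>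
                (\<exists>R. \<forall>z t. R < cmod z \<longrightarrow> f (z, t) = 0)}"

definition L2H :: "(hpt \<Rightarrow> complex) set" where
  "L2H = {f. f \<in> borel_measurable borel \<and> pi_periodic f \<and>
             set_integrable lborel fdom (\<lambda>p. (cmod (f p))\<^sup>2)}"

definition L2norm :: "(hpt \<Rightarrow> complex) \<Rightarrow> real" where
  "L2norm f = sqrt (LINT p:fdom|lborel. (cmod (f p))\<^sup>2)"

definition ae_eq :: "(hpt \<Rightarrow> complex) \<Rightarrow> (hpt \<Rightarrow> complex) \<Rightarrow> bool" where
  "ae_eq f g \<longleftrightarrow> (AE p in lborel. p \<in> fdom \<longrightarrow> f p = g p)"

text \<open>L^2(C): classes having a representative independent of t.\<close>
definition L2C :: "(hpt \<Rightarrow> complex) set" where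
  "L2C = {f \<in> L2H. \<exists>h::complex \<Rightarrow> complex. ae_eq f (\<lambda>p. h (fst p))}"

text \<open>^0L^2: fibre integrals over t in [0,pi] vanish (for almost every z).\<close>
definition L2zero :: "(hpt \<Rightarrow> complex) set" where
  "L2zero = {f \<in> L2H. AE z in lborel. (LINT t:{0..pi}|lborel. f (z, t)) = 0}"

definition bounded_ext_xray :: "nat \<Rightarrow> nat \<Rightarrow> ((hpt \<Rightarrow> complex) \<Rightarrow> (hpt \<Rightarrow> complex)) \<Rightarrow> bool" where
  "bounded_ext_xray a b T \<longleftrightarrow>
     (\<forall>f\<in>L2H. T f \<in> L2H) \<and>
     (\<forall>f\<in>L2H. \<forall>g\<in>L2H. \<forall>c::complex. ae_eq (T (\<lambda>p. f p + c * g p)) (\<lambda>p. T f p + c * T g p)) \<and>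
     (\<exists>C. \<forall>f\<in>L2H. L2norm (T f) \<le> C * L2norm f) \<and>
     (\<forall>f\<in>Cc_inf. ae_eq (T f) (xray a b f))"

end

theory Submission
  imports Defs "HOL-Computational_Algebra.Polynomial"
begin


definition smooth1 :: "(real \<Rightarrow> real) \<Rightarrow> bool" where
  "smooth1 g \<longleftrightarrow> (\<exists>d. d 0 = g \<and> (\<forall>n x. (d n has_real_derivative d (Suc n) x) (at x)))"

lemma smooth1_deriv:
  assumes "smooth1 g"
  obtains g' where "\<And>x. (g has_real_derivative g' x) (at x)" "smooth1 g'"
proof -
  obtain d where d: "d 0 = g" "\<And>n x. (d n has_real_derivative d (Suc n) x) (at x)"
    using assms unfolding smooth1_def by blast
  have "smooth1 (d 1)" unfolding smooth1_def
    by (rule exI[of _ "\<lambda>n. d (Suc n)"]) (use d in auto)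
  then show ?thesis using that d by (metis One_nat_def)
qed

lemma smooth1_id: "smooth1 (\<lambda>x. x)"
  unfolding smooth1_def
  apply (rule exI[of _ "\<lambda>n. if n = 0 then (\<lambda>x. x) else if n = 1 then (\<lambda>x. 1) else (\<lambda>x. 0)"])
  apply (auto intro!: derivative_eq_intros)
  done

lemma smooth1_cos: "smooth1 cos"
  unfolding smooth1_def
proof (rule exI[of _ "\<lambda>n x. cos (x + real n * (pi/2))"], safe)
  show "(\<lambda>x. cos (x + real 0 * (pi / 2))) = cos" by simp
  fix n x
  show "((\<lambda>x. cos (x + real n * (pi / 2))) has_real_derivative cos (x + real (Suc n) * (pi / 2))) (at x)"
  proof -
    have c: "cos (y + pi/2) = - sin y" for y by (simp add: cos_add)
    have "cos (x + real (Suc n) * (pi / 2)) = - sin (x + real n * (pi / 2))"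
      using c[of "x + real n * (pi / 2)"] by (simp add: algebra_simps add_divide_distrib)
    then show ?thesis by (auto intro!: derivative_eq_intros)
  qed
qed

lemma poly_exp_limit:
  fixes p :: "real poly"
  shows "((\<lambda>y. y ^ m * poly p y * exp (- y)) \<longlongrightarrow> 0) at_top"
proof (induction p arbitrary: m)
  case 0
  then show ?case by simp
next
  case (pCons a p)
  have e: "(\<lambda>y. y ^ m * poly (pCons a p) y * exp (- y)) =
     (\<lambda>y. a * (y ^ m / exp y) + y ^ Suc m * poly p y * exp (- y))"
    by (auto simp: exp_minus field_simps)
  have "((\<lambda>y. a * (y ^ m / exp y) + y ^ Suc m * poly p y * exp (- y)) \<longlongrightarrow> a * 0 + 0) at_top"
    by (intro tendsto_intros tendsto_power_div_exp_0 pCons.IH)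
  then show ?case unfolding e by simp
qed

fun bp :: "nat \<Rightarrow> real poly" where
  "bp 0 = 1"
| "bp (Suc n) = [:0,0,1:] * (bp n - pderiv (bp n))"

definition bfun :: "nat \<Rightarrow> real \<Rightarrow> real" where
  "bfun n x = (if x > 0 then poly (bp n) (1/x) * exp (- (1/x)) else 0)"

lemma bfun_deriv_pos:
  assumes "x > 0"
  shows "(bfun n has_real_derivative bfun (Suc n) x) (at x)"
proof -
  have "((\<lambda>x. poly (bp n) (1/x) * exp (- (1/x))) has_real_derivative
        (poly (pderiv (bp n)) (1/x) * (- 1 / x^2) * exp (- (1/x)) + poly (bp n) (1/x) * (exp (- (1/x)) * (1 / x^2)))) (at x)"
    using assms
    by (auto intro!: derivative_eq_intros simp: power2_eq_square field_simps)
  moreover have "poly (pderiv (bp n)) (1/x) * (- 1 / x^2) * exp (- (1/x)) + poly (bp n) (1/x) * (exp (- (1/x)) * (1 / x^2))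
     = bfun (Suc n) x"
    using assms by (simp add: bfun_def field_simps power2_eq_square)
  ultimately have d: "((\<lambda>x. poly (bp n) (1/x) * exp (- (1/x))) has_real_derivative bfun (Suc n) x) (at x)"
    by simp
  show ?thesis
    apply (rule has_field_derivative_transform_within_open[OF d, of "{0<..}"])
    using assms by (auto simp: bfun_def)
qed

lemma bfun_deriv_neg:
  assumes "x < 0"
  shows "(bfun n has_real_derivative bfun (Suc n) x) (at x)"
proof -
  have d: "((\<lambda>x. 0) has_real_derivative bfun (Suc n) x) (at x)"
    using assms by (auto simp: bfun_def)
  show ?thesis
    apply (rule has_field_derivative_transform_within_open[OF d, of "{..<0}"])
    using assms by (auto simp: bfun_def)
qed

lemma bfun_deriv_0: "(bfun n has_real_derivative bfun (Suc n) 0) (at 0)"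
proof -
  have r: "((\<lambda>h. (bfun n h - bfun n 0) / h) \<longlongrightarrow> 0) (at_right 0)"
  proof -
    have lim: "((\<lambda>y. y ^ 1 * poly (bp n) y * exp (- y)) \<longlongrightarrow> 0) at_top"
      by (rule poly_exp_limit)
    have inv: "filterlim (\<lambda>h::real. 1 / h) at_top (at_right 0)"
      using filterlim_inverse_at_top_right by (simp add: inverse_eq_divide)
    have "((\<lambda>h. (1/h) ^ 1 * poly (bp n) (1/h) * exp (- (1/h))) \<longlongrightarrow> 0) (at_right 0)"
      using filterlim_compose[OF lim inv] by simp
    then show ?thesis
      apply (rule Lim_transform_eventually)
      apply (auto simp: eventually_at_right_less bfun_def eventually_at_right_field intro!: exI[of _ 1])
      done
  qed
  have l: "((\<lambda>h. (bfun n h - bfun n 0) / h) \<longlongrightarrow> 0) (at_left 0)"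
  proof -
    have "eventually (\<lambda>h. 0 = (bfun n h - bfun n 0) / h) (at_left (0::real))"
      by (auto simp: eventually_at_left_field bfun_def intro!: exI[of _ "-1"])
    then show ?thesis
      by (rule Lim_transform_eventually[OF tendsto_const])
  qed
  have "((\<lambda>h. (bfun n (0 + h) - bfun n 0) / h) \<longlongrightarrow> 0) (at 0)"
    using r l by (simp add: filterlim_split_at)
  then show ?thesis
    by (simp add: has_field_derivative_iff bfun_def)
qed

lemma smooth1_bfun: "smooth1 (bfun 0)"
  unfolding smooth1_def
proof (rule exI[of _ bfun], safe)
  fix n x
  show "(bfun n has_real_derivative bfun (Suc n) x) (at x)"
    using bfun_deriv_pos bfun_deriv_neg bfun_deriv_0
    by (cases "x > 0"; cases "x < 0") (auto simp: not_less)
qed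

lemma bfun0_eq: "bfun 0 x = (if x > 0 then exp (- (1/x)) else 0)"
  by (simp add: bfun_def)


inductive Kalg :: "(hpt \<Rightarrow> complex) \<Rightarrow> bool" where
  Kconst: "Kalg (\<lambda>p. c)"
| Kre: "Kalg (\<lambda>p. complex_of_real (Re (fst p)))"
| Kim: "Kalg (\<lambda>p. complex_of_real (Im (fst p)))"
| Kt: "Kalg (\<lambda>p. complex_of_real (snd p))"
| Kadd: "Kalg f \<Longrightarrow> Kalg g \<Longrightarrow> Kalg (\<lambda>p. f p + g p)"
| Kmult: "Kalg f \<Longrightarrow> Kalg g \<Longrightarrow> Kalg (\<lambda>p. f p * g p)"
| Kcomp: "Kalg f \<Longrightarrow> smooth1 g \<Longrightarrow> Kalg (\<lambda>p. complex_of_real (g (Re (f p))))"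

lemma bl_ofreal_Re: "bounded_linear (\<lambda>z. complex_of_real (Re z))"
  by (intro bounded_linear_compose[OF bounded_linear_of_real] bounded_linear_Re)

lemma Kalg_deriv:
  assumes "Kalg f"
  shows "\<exists>Df. (\<forall>x. (f has_derivative Df x) (at x)) \<and> (\<forall>v. Kalg (\<lambda>x. Df x v))"
  using assms
proof induction
  case (Kconst c)
  show ?case by (rule exI[of _ "\<lambda>x h. 0"]) (auto intro: Kalg.Kconst)
next
  case Kre
  have bl: "bounded_linear (\<lambda>h::hpt. complex_of_real (Re (fst h)))"
    by (intro bounded_linear_compose[OF bl_ofreal_Re] bounded_linear_fst)
  show ?case
    by (rule exI[of _ "\<lambda>x h. complex_of_real (Re (fst h))"])
       (auto intro: Kalg.Kconst bounded_linear_imp_has_derivative[OF bl])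
next
  case Kim
  have bl: "bounded_linear (\<lambda>h::hpt. complex_of_real (Im (fst h)))"
    by (intro bounded_linear_compose[OF bounded_linear_of_real]
          bounded_linear_compose[OF bounded_linear_Im] bounded_linear_fst)
  show ?case
    by (rule exI[of _ "\<lambda>x h. complex_of_real (Im (fst h))"])
       (auto intro: Kalg.Kconst bounded_linear_imp_has_derivative[OF bl])
next
  case Kt
  have bl: "bounded_linear (\<lambda>h::hpt. complex_of_real (snd h))"
    by (intro bounded_linear_compose[OF bounded_linear_of_real] bounded_linear_snd)
  show ?case
    by (rule exI[of _ "\<lambda>x h. complex_of_real (snd h)"])
       (auto intro: Kalg.Kconst bounded_linear_imp_has_derivative[OF bl])
next
  case (Kadd f g)
  then obtain Df Dg where f: "\<And>x. (f has_derivative Df x) (at x)" "\<And>v. Kalg (\<lambda>x. Df x v)"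
    and g: "\<And>x. (g has_derivative Dg x) (at x)" "\<And>v. Kalg (\<lambda>x. Dg x v)" by blast
  show ?case
    by (rule exI[of _ "\<lambda>x h. Df x h + Dg x h"])
       (auto intro: Kalg.Kadd f g has_derivative_add)
next
  case (Kmult f g)
  then obtain Df Dg where f: "\<And>x. (f has_derivative Df x) (at x)" "\<And>v. Kalg (\<lambda>x. Df x v)"
    and g: "\<And>x. (g has_derivative Dg x) (at x)" "\<And>v. Kalg (\<lambda>x. Dg x v)" by blast
  show ?case
    by (rule exI[of _ "\<lambda>x h. f x * Dg x h + Df x h * g x"])
       (auto intro!: Kalg.Kadd Kalg.Kmult f g has_derivative_mult Kmult.hyps)
next
  case (Kcomp f g)
  then obtain Df where f: "\<And>x. (f has_derivative Df x) (at x)" "\<And>v. Kalg (\<lambda>x. Df x v)" by blast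
  obtain g' where g: "\<And>x. (g has_real_derivative g' x) (at x)" "smooth1 g'"
    using smooth1_deriv[OF Kcomp.hyps(2)] by blast
  have d: "((\<lambda>p. complex_of_real (g (Re (f p)))) has_derivative
          (\<lambda>h. complex_of_real (g' (Re (f x)) * Re (Df x h)))) (at x)" for x
  proof -
    have "((\<lambda>p. Re (f p)) has_derivative (\<lambda>h. Re (Df x h))) (at x)"
      by (rule has_derivative_Re[OF f(1)])
    then have "((\<lambda>p. g (Re (f p))) has_derivative (\<lambda>h. g' (Re (f x)) * Re (Df x h))) (at x)"
      using has_derivative_compose[OF _ g(1)[unfolded has_field_derivative_def]]
      by (simp add: mult.commute)
    then show ?thesis
      by (rule has_derivative_of_real)
  qed
  have k: "Kalg (\<lambda>x. complex_of_real (g' (Re (f x)) * Re (Df x v)))" for v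
  proof -
    have "Kalg (\<lambda>x. complex_of_real (g' (Re (f x))) * complex_of_real ((\<lambda>y. y) (Re (Df x v))))"
      by (intro Kalg.Kmult Kalg.Kcomp Kcomp.hyps g(2) f(2) smooth1_id)
    then show ?thesis by simp
  qed
  show ?case
    by (rule exI[of _ "\<lambda>x h. complex_of_real (g' (Re (f x)) * Re (Df x h))"]) (use d k in auto)
qed

lemma Kalg_smooth: "Kalg f \<Longrightarrow> smooth_fun f"
proof (coinduction arbitrary: f rule: smooth_fun.coinduct)
  case (smooth_fun f)
  then obtain Df where f: "\<And>x. (f has_derivative Df x) (at x)" "\<And>v. Kalg (\<lambda>x. Df x v)"
    using Kalg_deriv by blast
  have fd: "frechet_derivative f (at x) = Df x" for x
    using frechet_derivative_at[OF f(1)] by simp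
  show ?case
    using f by (auto simp: fd differentiable_def)
qed

lemma Kalg_continuous: "Kalg f \<Longrightarrow> continuous_on UNIV f"
  using Kalg_deriv
  by (metis continuous_at_imp_continuous_on differentiable_def differentiable_imp_continuous_within)


lemma Kalg_cos_affine: "Kalg (\<lambda>p. complex_of_real (cos (a * snd p + b)))"
proof -
  have "Kalg (\<lambda>p. complex_of_real (cos (Re ((\<lambda>p. complex_of_real a * complex_of_real (snd p) + complex_of_real b) p))))"
    by (intro Kalg.Kcomp Kalg.Kadd Kalg.Kmult Kalg.Kconst Kalg.Kt smooth1_cos)
  then show ?thesis by simp
qed

lemma Kalg_cis: "Kalg (\<lambda>p. cis (a * snd p))"
proof -
  have "Kalg (\<lambda>p. complex_of_real (cos (a * snd p + 0)) + \<i> * complex_of_real (cos (a * snd p + - (pi/2))))"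
    by (intro Kalg.Kadd Kalg.Kmult Kalg.Kconst Kalg_cos_affine)
  moreover have "cos (x - pi/2) = sin x" for x by (simp add: cos_diff)
  moreover have "cis x = complex_of_real (cos x) + \<i> * complex_of_real (sin x)" for x
    by (simp add: complex_eq_iff)
  ultimately show ?thesis by simp
qed

definition Kz :: "(complex \<Rightarrow> complex) \<Rightarrow> bool" where
  "Kz v \<longleftrightarrow> Kalg (\<lambda>p. v (fst p))"

lemma Kz_const: "Kz (\<lambda>z. c)" by (simp add: Kz_def Kalg.Kconst)
lemma Kz_add: "Kz u \<Longrightarrow> Kz v \<Longrightarrow> Kz (\<lambda>z. u z + v z)" by (simp add: Kz_def Kalg.Kadd)
lemma Kz_mult: "Kz u \<Longrightarrow> Kz v \<Longrightarrow> Kz (\<lambda>z. u z * v z)"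
  using Kalg.Kmult[of "\<lambda>p. u (fst p)" "\<lambda>p. v (fst p)"] by (simp add: Kz_def)

inductive Ealg :: "(hpt \<Rightarrow> complex) \<Rightarrow> bool" where
  Epure: "Kz v \<Longrightarrow> Ealg (\<lambda>p. v (fst p) * cis (2 * of_int k * snd p))"
| Eadd: "Ealg f \<Longrightarrow> Ealg g \<Longrightarrow> Ealg (\<lambda>p. f p + g p)"

inductive E0alg :: "(hpt \<Rightarrow> complex) \<Rightarrow> bool" where
  E0zero: "E0alg (\<lambda>p. 0)"
| E0pure: "Kz v \<Longrightarrow> k \<noteq> 0 \<Longrightarrow> E0alg (\<lambda>p. v (fst p) * cis (2 * of_int k * snd p))"
| E0add: "E0alg f \<Longrightarrow> E0alg g \<Longrightarrow> E0alg (\<lambda>p. f p + g p)"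

lemma Ealg_mult_pure:
  assumes "Ealg f" "Kz v"
  shows "Ealg (\<lambda>p. f p * (v (fst p) * cis (2 * of_int k * snd p)))"
  using assms(1)
proof induction
  case (Epure u l)
  have "Ealg (\<lambda>p. (\<lambda>z. u z * v z) (fst p) * cis (2 * of_int (l + k) * snd p))"
    by (intro Ealg.Epure Kz_mult Epure assms(2))
  moreover have c: "cis (2 * of_int (l + k) * x) = cis (2 * of_int l * x) * cis (2 * of_int k * x)" for x
    by (simp add: cis_mult algebra_simps)
  moreover have "(\<lambda>p. u (fst p) * cis (2 * of_int l * snd p) * (v (fst p) * cis (2 * of_int k * snd p)))
     = (\<lambda>p. (\<lambda>z. u z * v z) (fst p) * cis (2 * of_int (l + k) * snd p))"
    by (rule ext) (simp add: cis_mult algebra_simps)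
  ultimately show ?case by simp
next
  case (Eadd f g)
  then show ?case using Ealg.Eadd[OF Eadd.IH] by (simp add: algebra_simps)
qed

lemma Ealg_mult:
  assumes "Ealg f" "Ealg g"
  shows "Ealg (\<lambda>p. f p * g p)"
  using assms(2)
proof induction
  case (Epure v k)
  then show ?case using Ealg_mult_pure[OF assms(1)] by blast
next
  case (Eadd g h)
  then show ?case using Ealg.Eadd[OF Eadd.IH] by (simp add: algebra_simps)
qed

lemma Ealg_decomp:
  assumes "Ealg f"
  shows "\<exists>u f'. Kz u \<and> E0alg f' \<and> f = (\<lambda>p. u (fst p) + f' p)"
  using assms
proof induction
  case (Epure v k)
  show ?case
  proof (cases "k = 0")
    case True
    then show ?thesis using Epure E0alg.E0zero by (intro exI[of _ v] exI[of _ "\<lambda>p. 0"]) auto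
  next
    case False
    then show ?thesis using Epure E0alg.E0pure[OF Epure False] Kz_const
      by (intro exI[of _ "\<lambda>z. 0"] exI[of _ "\<lambda>p. v (fst p) * cis (2 * of_int k * snd p)"]) auto
  qed
next
  case (Eadd f g)
  then obtain u1 f1 u2 f2 where "Kz u1" "E0alg f1" "f = (\<lambda>p. u1 (fst p) + f1 p)"
     "Kz u2" "E0alg f2" "g = (\<lambda>p. u2 (fst p) + f2 p)" by blast
  then show ?case
    by (intro exI[of _ "\<lambda>z. u1 z + u2 z"] exI[of _ "\<lambda>p. f1 p + f2 p"])
       (auto intro: Kz_add E0alg.E0add)
qed

lemma E0alg_Kalg: "E0alg f \<Longrightarrow> Kalg f"
proof (induction rule: E0alg.induct)
  case E0zero then show ?case by (rule Kalg.Kconst)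
next
  case (E0pure v k)
  then show ?case using Kalg.Kmult[OF _ Kalg_cis[of "2 * of_int k"]] by (simp add: Kz_def)
next
  case (E0add f g) then show ?case using E0add.IH by (intro Kalg.Kadd)
qed

inductive Calg :: "(complex \<times> complex \<Rightarrow> complex) \<Rightarrow> bool" where
  Cconst: "Calg (\<lambda>q. c)"
| Cre: "Calg (\<lambda>q. complex_of_real (Re (fst q)))"
| Cim: "Calg (\<lambda>q. complex_of_real (Im (fst q)))"
| Cw: "Calg (\<lambda>q. snd q)"
| Ccw: "Calg (\<lambda>q. cnj (snd q))"
| Cadd: "Calg f \<Longrightarrow> Calg g \<Longrightarrow> Calg (\<lambda>q. f q + g q)"
| Cmult: "Calg f \<Longrightarrow> Calg g \<Longrightarrow> Calg (\<lambda>q. f q * g q)"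

lemma Calg_cnj: "Calg f \<Longrightarrow> Calg (\<lambda>q. cnj (f q))"
  by (induction rule: Calg.induct) (auto intro: Calg.intros)

lemma Calg_cont: "Calg f \<Longrightarrow> continuous_on S f"
  by (induction rule: Calg.induct) (auto intro!: continuous_intros)

lemma Calg_pullback: "Calg h \<Longrightarrow> Ealg (\<lambda>p. h (fst p, cis (2 * snd p)))"
proof (induction rule: Calg.induct)
  case (Cconst c)
  then show ?case using Ealg.Epure[OF Kz_const[of c], of 0] by simp
next
  case Cre
  have "Kz (\<lambda>z. complex_of_real (Re z))" by (simp add: Kz_def Kalg.Kre)
  then show ?case using Ealg.Epure[of "\<lambda>z. complex_of_real (Re z)" 0] by simp
next
  case Cim
  have "Kz (\<lambda>z. complex_of_real (Im z))" by (simp add: Kz_def Kalg.Kim)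
  then show ?case using Ealg.Epure[of "\<lambda>z. complex_of_real (Im z)" 0] by simp
next
  case Cw
  then show ?case using Ealg.Epure[OF Kz_const[of 1], of 1] by simp
next
  case Ccw
  have "cnj (cis (2 * x)) = cis (2 * of_int (-1) * x)" for x
    by (simp add: cis_cnj)
  then show ?case using Ealg.Epure[OF Kz_const[of 1], of "-1"] by simp
next
  case (Cadd f g) then show ?case using Cadd.IH by (intro Ealg.Eadd)
next
  case (Cmult f g) then show ?case using Cmult.IH by (intro Ealg_mult)
qed

definition Psw :: "(complex \<times> complex \<Rightarrow> real) \<Rightarrow> bool" where
  "Psw g \<longleftrightarrow> (\<exists>h. Calg h \<and> g = (\<lambda>q. Re (h q)))"

lemma Psw_approx:
  assumes "compact S" "continuous_on S f" "0 < e"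
  shows "\<exists>h. Calg h \<and> (\<forall>x\<in>S. \<bar>f x - Re (h x)\<bar> < e)"
proof -
  have "\<exists>g. Psw g \<and> (\<forall>x \<in> S. \<bar>f x - g x\<bar> < e)"
  proof (rule Stone_Weierstrass_HOL[OF assms(1) _ _ _ _ _ assms(2,3)])
    show "Psw (\<lambda>x. c)" for c
      unfolding Psw_def by (rule exI[of _ "\<lambda>q. complex_of_real c"]) (auto intro: Calg.Cconst)
    show "Psw g \<Longrightarrow> continuous_on S g" for g
      unfolding Psw_def by (auto intro!: continuous_intros Calg_cont)
    show "Psw f \<and> Psw g \<Longrightarrow> Psw (\<lambda>x. f x + g x)" for f g
    proof -
      assume "Psw f \<and> Psw g"
      then obtain a b where ab: "Calg a" "Calg b" "f = (\<lambda>q. Re (a q))" "g = (\<lambda>q. Re (b q))"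
        unfolding Psw_def by blast
      then show ?thesis unfolding Psw_def
        by (intro exI[of _ "\<lambda>q. a q + b q"]) (auto intro: Calg.Cadd)
    qed
    show "Psw f \<and> Psw g \<Longrightarrow> Psw (\<lambda>x. f x * g x)" for f g
    proof -
      assume "Psw f \<and> Psw g"
      then obtain a b where ab: "Calg a" "Calg b" "f = (\<lambda>q. Re (a q))" "g = (\<lambda>q. Re (b q))"
        unfolding Psw_def by blast
      have "Calg (\<lambda>q. (\<lambda>q. 1/2) q * ((\<lambda>q. a q * b q) q + (\<lambda>q. a q * cnj (b q)) q))"
        by (intro Calg.Cmult Calg.Cadd Calg.Cconst Calg_cnj ab)
      moreover have "Re x * Re y = Re (1/2 * (x * y + x * cnj y))" for x y
        by (simp add: field_simps)
      ultimately show ?thesis unfolding Psw_def ab by (intro exI[of _ "\<lambda>q. 1/2 * (a q * b q + a q * cnj (b q))"]) auto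
    qed
    show "\<exists>f. Psw f \<and> f x \<noteq> f y" if "x \<in> S \<and> y \<in> S \<and> x \<noteq> y" for x y
    proof -
      obtain z w z' w' where xy: "x = (z, w)" "y = (z', w')" by fastforce
      have "Re z \<noteq> Re z' \<or> Im z \<noteq> Im z' \<or> Re w \<noteq> Re w' \<or> Im w \<noteq> Im w'"
        using that xy by (auto simp: complex_eq_iff)
      then show ?thesis
      proof (elim disjE)
        assume "Re z \<noteq> Re z'" then show ?thesis using xy
          by (intro exI[of _ "\<lambda>q. Re (complex_of_real (Re (fst q)))"]) (auto simp: Psw_def intro!: exI Calg.Cre)
      next
        assume "Im z \<noteq> Im z'" then show ?thesis using xy
          by (intro exI[of _ "\<lambda>q. Re (complex_of_real (Im (fst q)))"]) (auto simp: Psw_def intro!: exI Calg.Cim)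
      next
        assume "Re w \<noteq> Re w'" then show ?thesis using xy
          by (intro exI[of _ "\<lambda>q. Re (snd q)"]) (auto simp: Psw_def intro!: exI Calg.Cw)
      next
        assume "Im w \<noteq> Im w'"
        moreover have "Calg (\<lambda>q. (\<lambda>q. - \<i>) q * snd q)" by (intro Calg.Cmult Calg.Cconst Calg.Cw)
        ultimately show ?thesis using xy
          by (intro exI[of _ "\<lambda>q. Re (- \<i> * snd q)"]) (auto simp: Psw_def)
      qed
    qed
  qed
  then show ?thesis unfolding Psw_def by blast
qed


definition Q :: "(hpt \<Rightarrow> complex) \<Rightarrow> ennreal" where
  "Q f = (\<integral>\<^sup>+p. indicator fdom p * ennreal ((cmod (f p))\<^sup>2) \<partial>lborel)"

lemma fdom_sets: "fdom \<in> sets borel"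
proof -
  have "UNIV \<times> {0..<pi} \<in> sets ((lborel::complex measure) \<Otimes>\<^sub>M (lborel::real measure))"
    by (intro pair_measureI) auto
  then show ?thesis unfolding lborel_prod fdom_def by simp
qed

lemma fdom_sets_lborel: "fdom \<in> sets lborel"
  using fdom_sets by simp

lemma fdom_pred[measurable]: "Measurable.pred borel (\<lambda>x. x \<in> fdom)"
  using fdom_sets by (simp add: pred_def)

lemma Q_mono:
  assumes "\<And>p. p \<in> fdom \<Longrightarrow> cmod (f p) \<le> cmod (g p)"
  shows "Q f \<le> Q g"
  unfolding Q_def
  by (intro nn_integral_mono) (auto simp: indicator_def assms power_mono)

lemma Q_cong_AE:
  assumes "AE p in lborel. p \<in> fdom \<longrightarrow> f p = g p"
  shows "Q f = Q g"
  unfolding Q_def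
  by (intro nn_integral_cong_AE) (use assms in \<open>auto simp: indicator_def elim!: eventually_mono\<close>)

lemma Q_commute: "Q (\<lambda>p. f p - g p) = Q (\<lambda>p. g p - f p)"
  unfolding Q_def by (simp add: norm_minus_commute)

lemma Q_uminus: "Q (\<lambda>p. - f p) = Q f"
  unfolding Q_def by simp

lemma L2norm_nonneg: "0 \<le> L2norm f"
  unfolding L2norm_def set_lebesgue_integral_def by (auto intro!: integral_nonneg_AE)


lemma sq_bound: "(cmod (x + y))\<^sup>2 \<le> 2 * (cmod x)\<^sup>2 + 2 * (cmod y)\<^sup>2"
proof -
  have "cmod (x + y) \<le> cmod x + cmod y" by (rule norm_triangle_ineq)
  then have "(cmod (x + y))\<^sup>2 \<le> (cmod x + cmod y)\<^sup>2" by (simp add: power_mono)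
  also have "\<dots> \<le> 2 * (cmod x)\<^sup>2 + 2 * (cmod y)\<^sup>2"
  proof -
    have "0 \<le> (cmod x - cmod y)\<^sup>2" by simp
    then show ?thesis by (simp add: power2_eq_square algebra_simps)
  qed
  finally show ?thesis .
qed
lemma ennreal_bound: "(a::real) \<le> 2 * b + 2 * c \<Longrightarrow> 0 \<le> b \<Longrightarrow> 0 \<le> c \<Longrightarrow> ennreal a \<le> 2 * ennreal b + 2 * ennreal c"
proof -
  assume h: "a \<le> 2 * b + 2 * c" "0 \<le> b" "0 \<le> c"
  have "ennreal a \<le> ennreal (2 * b + 2 * c)" using h(1) by (rule ennreal_leI)
  also have "\<dots> = 2 * ennreal b + 2 * ennreal c"
    using h by (simp add: ennreal_plus ennreal_mult)
  finally show ?thesis .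
qed

lemma Qint_meas[measurable]:
  assumes [measurable]: "f \<in> borel_measurable lborel"
  shows "(\<lambda>p. indicator fdom p * ennreal ((cmod (f p))\<^sup>2)) \<in> borel_measurable lborel"
  by measurable

lemma Q_add:
  assumes [measurable]: "f \<in> borel_measurable lborel" "g \<in> borel_measurable lborel"
  shows "Q (\<lambda>p. f p + g p) \<le> 2 * Q f + 2 * Q g"
proof -
  have "Q (\<lambda>p. f p + g p) \<le> (\<integral>\<^sup>+p. 2 * (indicator fdom p * ennreal ((cmod (f p))\<^sup>2))
        + 2 * (indicator fdom p * ennreal ((cmod (g p))\<^sup>2)) \<partial>lborel)"
    unfolding Q_def
  proof (intro nn_integral_mono)
    fix p
    show "indicator fdom p * ennreal ((cmod (f p + g p))\<^sup>2) \<le>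
       2 * (indicator fdom p * ennreal ((cmod (f p))\<^sup>2)) + 2 * (indicator fdom p * ennreal ((cmod (g p))\<^sup>2))"
      using ennreal_bound[OF sq_bound[of "f p" "g p"]] by (simp add: indicator_def)
  qed
  also have "\<dots> = 2 * Q f + 2 * Q g"
  proof -
    have mf: "(\<lambda>p. indicator fdom p * ennreal ((cmod (f p))\<^sup>2)) \<in> borel_measurable lborel"
      and mg: "(\<lambda>p. indicator fdom p * ennreal ((cmod (g p))\<^sup>2)) \<in> borel_measurable lborel"
      by (rule Qint_meas, simp)+
    have m2f: "(\<lambda>p. 2 * (indicator fdom p * ennreal ((cmod (f p))\<^sup>2))) \<in> borel_measurable lborel"
      using mf by (rule borel_measurable_times_ennreal[OF borel_measurable_const])
    have m2g: "(\<lambda>p. 2 * (indicator fdom p * ennreal ((cmod (g p))\<^sup>2))) \<in> borel_measurable lborel"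
      using mg by (rule borel_measurable_times_ennreal[OF borel_measurable_const])
    show ?thesis unfolding Q_def
      by (simp only: nn_integral_add[OF m2f m2g] nn_integral_cmult[OF mf] nn_integral_cmult[OF mg])
  qed
  finally show ?thesis .
qed
lemma Q_tri:
  assumes [measurable]: "f \<in> borel_measurable lborel" "g \<in> borel_measurable lborel" "h \<in> borel_measurable lborel"
  shows "Q (\<lambda>p. f p - h p) \<le> 2 * Q (\<lambda>p. f p - g p) + 2 * Q (\<lambda>p. g p - h p)"
  using Q_add[of "\<lambda>p. f p - g p" "\<lambda>p. g p - h p"] by simp

lemma Q_zero_iff:
  assumes [measurable]: "f \<in> borel_measurable lborel"
  shows "Q f = 0 \<longleftrightarrow> (AE p in lborel. p \<in> fdom \<longrightarrow> f p = 0)"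
proof -
  have m: "(\<lambda>p. indicator fdom p * ennreal ((cmod (f p))\<^sup>2)) \<in> borel_measurable lborel"
    by (rule Qint_meas) simp
  show ?thesis unfolding Q_def nn_integral_0_iff_AE[OF m]
    by (intro arg_cong[where f="\<lambda>P. eventually P _"] ext) (auto simp: indicator_def)
qed

lemma L2H_iff: "f \<in> L2H \<longleftrightarrow> f \<in> borel_measurable lborel \<and> pi_periodic f \<and> Q f < \<infinity>"
proof -
  have "set_integrable lborel fdom (\<lambda>p. (cmod (f p))\<^sup>2) \<longleftrightarrow> Q f < \<infinity>"
    if [measurable]: "f \<in> borel_measurable lborel"
  proof -
    have m: "(\<lambda>p. indicator fdom p *\<^sub>R (cmod (f p))\<^sup>2) \<in> borel_measurable lborel"
      by measurable
    have "(\<integral>\<^sup>+p. ennreal (norm (indicator fdom p *\<^sub>R (cmod (f p))\<^sup>2)) \<partial>lborel) = Q f"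
      unfolding Q_def by (intro nn_integral_cong) (auto simp: indicator_def)
    then show ?thesis
      unfolding set_integrable_def integrable_iff_bounded using m by simp
  qed
  then show ?thesis unfolding L2H_def by auto
qed

lemma L2norm_Q:
  assumes "f \<in> L2H"
  shows "Q f = ennreal ((L2norm f)\<^sup>2)"
proof -
  have [measurable]: "f \<in> borel_measurable lborel" using assms L2H_iff by blast
  have i: "integrable lborel (\<lambda>p. indicator fdom p *\<^sub>R (cmod (f p))\<^sup>2)"
    using assms unfolding L2H_def set_integrable_def by blast
  have nn: "0 \<le> (LINT p:fdom|lborel. (cmod (f p))\<^sup>2)"
    unfolding set_lebesgue_integral_def by (intro integral_nonneg_AE) auto
  have "Q f = ennreal (LINT p:fdom|lborel. (cmod (f p))\<^sup>2)"
    unfolding Q_def set_lebesgue_integral_def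
    by (subst nn_integral_eq_integral[OF i, symmetric]) (auto simp: indicator_def intro!: nn_integral_cong)
  then show ?thesis unfolding L2norm_def using nn by simp
qed

lemma ae_eq_Q:
  assumes [measurable]: "f \<in> borel_measurable lborel" "g \<in> borel_measurable lborel"
  shows "ae_eq f g \<longleftrightarrow> Q (\<lambda>p. f p - g p) = 0"
  by (subst Q_zero_iff) (auto simp: ae_eq_def)

lemma L2H_diff:
  assumes "f \<in> L2H" "g \<in> L2H"
  shows "(\<lambda>p. f p - g p) \<in> L2H"
proof -
  have [measurable]: "f \<in> borel_measurable lborel" "g \<in> borel_measurable lborel"
    "Q f < \<infinity>" "Q g < \<infinity>" using assms L2H_iff by auto
  have "Q (\<lambda>p. f p + (- g p)) \<le> 2 * Q f + 2 * Q (\<lambda>p. - g p)"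
    by (rule Q_add) auto
  also have "\<dots> < \<infinity>" using \<open>Q f < \<infinity>\<close> \<open>Q g < \<infinity>\<close>
    by (simp add: Q_uminus ennreal_mult_less_top)
  finally show ?thesis
    using assms unfolding L2H_iff pi_periodic_def by auto
qed

lemma T_lip:
  assumes "bounded_ext_xray a b T"
  obtains C where "\<And>f g. f \<in> L2H \<Longrightarrow> g \<in> L2H \<Longrightarrow>
     Q (\<lambda>p. T f p - T g p) \<le> ennreal C * Q (\<lambda>p. f p - g p)"
proof -
  from assms obtain C where TL: "\<And>f. f \<in> L2H \<Longrightarrow> T f \<in> L2H"
    and lin: "\<And>f g c. f \<in> L2H \<Longrightarrow> g \<in> L2H \<Longrightarrow> ae_eq (T (\<lambda>p. f p + c * g p)) (\<lambda>p. T f p + c * T g p)"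
    and bd: "\<And>f. f \<in> L2H \<Longrightarrow> L2norm (T f) \<le> C * L2norm f"
    unfolding bounded_ext_xray_def by blast
  show ?thesis
  proof (rule that[of "(max C 0)\<^sup>2"])
    fix f g assume f: "f \<in> L2H" and g: "g \<in> L2H"
    define d where "d = (\<lambda>p. f p - g p)"
    have d: "d \<in> L2H" unfolding d_def by (rule L2H_diff[OF f g])
    have eq: "(\<lambda>p. g p + 1 * d p) = f" by (auto simp: d_def)
    have "ae_eq (T f) (\<lambda>p. T g p + 1 * T d p)"
      using lin[OF g d, of 1] by (simp only: eq)
    then have "AE p in lborel. p \<in> fdom \<longrightarrow> T f p - T g p = T d p"
      unfolding ae_eq_def by (auto elim!: eventually_mono)
    then have "Q (\<lambda>p. T f p - T g p) = Q (T d)"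
      by (intro Q_cong_AE)
    also have "\<dots> = ennreal ((L2norm (T d))\<^sup>2)"
      using L2norm_Q TL d by blast
    also have "\<dots> \<le> ennreal ((max C 0)\<^sup>2 * (L2norm d)\<^sup>2)"
    proof -
      have n0: "0 \<le> L2norm (T d)" "0 \<le> L2norm d" by (rule L2norm_nonneg)+
      have "C * L2norm d \<le> max C 0 * L2norm d"
        using n0 by (intro mult_right_mono) auto
      then have "L2norm (T d) \<le> max C 0 * L2norm d"
        using bd[OF d] by linarith
      then have "(L2norm (T d))\<^sup>2 \<le> (max C 0 * L2norm d)\<^sup>2"
        using n0 by (intro power_mono) auto
      then show ?thesis by (simp add: power_mult_distrib ennreal_leI)
    qed
    also have "\<dots> = ennreal ((max C 0)\<^sup>2) * Q d"
      using L2norm_Q[OF d] by (simp add: ennreal_mult)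
    finally show "Q (\<lambda>p. T f p - T g p) \<le> ennreal ((max C 0)\<^sup>2) * Q (\<lambda>p. f p - g p)"
      unfolding d_def .
  qed
qed



lemma AE_fst:
  assumes "AE z in lborel. P z"
  shows "AE p in (lborel::hpt measure). P (fst p)"
proof -
  from assms obtain N where N0: "{z \<in> space lborel. \<not> P z} \<subseteq> N" "emeasure lborel N = 0" "N \<in> sets (lborel::complex measure)"
    by (rule AE_E)
  then have N: "N \<in> null_sets (lborel::complex measure)" "{z \<in> space lborel. \<not> P z} \<subseteq> N"
    by auto
  have "N \<times> UNIV \<in> null_sets ((lborel::complex measure) \<Otimes>\<^sub>M (lborel::real measure))"
    using N(1) by (intro lborel.times_in_null_sets1) auto
  then have nl: "N \<times> UNIV \<in> null_sets (lborel::hpt measure)" by (simp add: lborel_prod)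
  show ?thesis
    by (rule AE_I'[OF nl]) (use N(2) in auto)
qed

lemma AE_fst_back:
  assumes "AE p in (lborel::hpt measure). p \<in> fdom \<longrightarrow> P (fst p)"
  shows "AE z in lborel. P z"
proof -
  have "AE p in (lborel::complex measure) \<Otimes>\<^sub>M (lborel::real measure). p \<in> fdom \<longrightarrow> P (fst p)"
    by (subst lborel_prod) (rule assms)
  from lborel_pair.AE_pair[OF this]
  have "AE z in lborel. AE t in lborel. (z, t) \<in> fdom \<longrightarrow> P z" by simp
  then show ?thesis
  proof (rule eventually_mono)
    fix z assume h: "AE t in lborel. (z, t) \<in> fdom \<longrightarrow> P z"
    show "P z"
    proof (rule ccontr)
      assume "\<not> P z"
      then have "AE t in lborel. t \<notin> {0..<pi}" using h by (auto simp: fdom_def elim!: eventually_mono)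
      then have "{0..<pi} \<in> null_sets (lborel::real measure)"
        by (subst AE_iff_null_sets) auto
      then show False by (simp add: null_sets_def)
    qed
  qed
qed

definition Pav :: "(hpt \<Rightarrow> complex) \<Rightarrow> hpt \<Rightarrow> complex" where
  "Pav f p = (LINT s:{0..pi}|lborel. f (fst p, s)) / pi"

lemma Pav_fst: "Pav f (z, t) = Pav f (z, 0)"
  by (simp add: Pav_def)

lemma Pav_meas[measurable]:
  assumes f: "f \<in> borel_measurable lborel"
  shows "Pav f \<in> borel_measurable lborel"
proof -
  have f2: "f \<in> borel_measurable ((lborel::complex measure) \<Otimes>\<^sub>M (lborel::real measure))"
    using f by (simp add: lborel_prod)
  have "(\<lambda>(z, s). indicator {0..pi} s *\<^sub>R f (z, s)) \<in> borel_measurable ((lborel::complex measure) \<Otimes>\<^sub>M (lborel::real measure))"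
    using f2 by measurable
  then have "(\<lambda>z. \<integral>s. indicator {0..pi} s *\<^sub>R f (z, s) \<partial>lborel) \<in> borel_measurable (lborel::complex measure)"
    by (rule lborel.borel_measurable_lebesgue_integral[where f="\<lambda>z s. indicator {0..pi} s *\<^sub>R f (z, s)", simplified])
  then have "(\<lambda>p. (\<integral>s. indicator {0..pi} s *\<^sub>R f (fst p, s) \<partial>lborel) / pi) \<in> borel_measurable ((lborel::complex measure) \<Otimes>\<^sub>M (lborel::real measure))"
    by measurable
  moreover have "Pav f = (\<lambda>p. (\<integral>s. indicator {0..pi} s *\<^sub>R f (fst p, s) \<partial>lborel) / pi)"
    by (auto simp: Pav_def set_lebesgue_integral_def fun_eq_iff)
  ultimately show ?thesis
    by (simp add: lborel_prod)
qed

lemma nn_fibre_Ico_Icc: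
  "(\<integral>\<^sup>+t. indicator {0..<pi} t * h t \<partial>lborel) = (\<integral>\<^sup>+t. indicator {0..pi} t * h t \<partial>lborel)"
  by (intro nn_integral_cong_AE) (use AE_lborel_singleton[of pi] in \<open>auto simp: indicator_def elim!: eventually_mono\<close>)

lemma Q_fibres:
  assumes [measurable]: "f \<in> borel_measurable lborel"
  shows "Q f = (\<integral>\<^sup>+z. (\<integral>\<^sup>+t. indicator {0..pi} t * ennreal ((cmod (f (z, t)))\<^sup>2) \<partial>lborel) \<partial>lborel)"
proof -
  have m: "(\<lambda>p. indicator fdom p * ennreal ((cmod (f p))\<^sup>2)) \<in> borel_measurable ((lborel::complex measure) \<Otimes>\<^sub>M (lborel::real measure))"
    using Qint_meas[OF assms] by (simp add: lborel_prod)
  have "Q f = (\<integral>\<^sup>+z. (\<integral>\<^sup>+t. indicator fdom (z, t) * ennreal ((cmod (f (z, t)))\<^sup>2) \<partial>lborel) \<partial>lborel)"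
    unfolding Q_def lborel.nn_integral_fst[OF m] lborel_prod ..
  also have "\<dots> = (\<integral>\<^sup>+z. (\<integral>\<^sup>+t. indicator {0..pi} t * ennreal ((cmod (f (z, t)))\<^sup>2) \<partial>lborel) \<partial>lborel)"
  proof (rule nn_integral_cong)
    fix z :: complex
    have "(\<integral>\<^sup>+t. indicator fdom (z, t) * ennreal ((cmod (f (z, t)))\<^sup>2) \<partial>lborel)
        = (\<integral>\<^sup>+t. indicator {0..<pi} t * ennreal ((cmod (f (z, t)))\<^sup>2) \<partial>lborel)"
      by (intro nn_integral_cong) (simp add: fdom_def indicator_def)
    also have "\<dots> = (\<integral>\<^sup>+t. indicator {0..pi} t * ennreal ((cmod (f (z, t)))\<^sup>2) \<partial>lborel)"
      by (rule nn_fibre_Ico_Icc)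
    finally show "(\<integral>\<^sup>+t. indicator fdom (z, t) * ennreal ((cmod (f (z, t)))\<^sup>2) \<partial>lborel)
        = (\<integral>\<^sup>+t. indicator {0..pi} t * ennreal ((cmod (f (z, t)))\<^sup>2) \<partial>lborel)" .
  qed
  finally show ?thesis .
qed

lemma sq_int_imp_int:
  fixes u :: "real \<Rightarrow> complex"
  assumes [measurable]: "u \<in> borel_measurable lborel"
    and fin: "(\<integral>\<^sup>+t. indicator {0..pi} t * ennreal ((cmod (u t))\<^sup>2) \<partial>lborel) < \<infinity>"
  shows "set_integrable lborel {0..pi} u"
proof -
  have "(\<integral>\<^sup>+t. ennreal (norm (indicator {0..pi} t *\<^sub>R u t)) \<partial>lborel) \<le>
        (\<integral>\<^sup>+t. indicator {0..pi} t * 1 + indicator {0..pi} t * ennreal ((cmod (u t))\<^sup>2) \<partial>lborel)"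
  proof (intro nn_integral_mono)
    fix t
    have "cmod (u t) \<le> 1 + (cmod (u t))\<^sup>2"
    proof -
      have "0 \<le> (cmod (u t) - 1/2)\<^sup>2" by simp
      then show ?thesis by (simp add: power2_eq_square algebra_simps)
    qed
    then have "ennreal (cmod (u t)) \<le> 1 + ennreal ((cmod (u t))\<^sup>2)"
      by (metis ennreal_1 ennreal_leI ennreal_plus norm_ge_zero zero_le_power2 zero_le_one)
    then show "ennreal (norm (indicator {0..pi} t *\<^sub>R u t)) \<le> indicator {0..pi} t * 1 + indicator {0..pi} t * ennreal ((cmod (u t))\<^sup>2)"
      by (auto simp: indicator_def)
  qed
  also have "\<dots> = emeasure lborel {0..pi} + (\<integral>\<^sup>+t. indicator {0..pi} t * ennreal ((cmod (u t))\<^sup>2) \<partial>lborel)"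
    by (subst nn_integral_add) auto
  also have "\<dots> < \<infinity>" using fin by simp
  finally show ?thesis
    unfolding set_integrable_def integrable_iff_bounded by auto
qed

definition fibint :: "(hpt \<Rightarrow> complex) \<Rightarrow> bool" where
  "fibint f \<longleftrightarrow> (AE z in lborel. set_integrable lborel {0..pi} (\<lambda>s. f (z, s)))"

lemma fibint_Q:
  assumes [measurable]: "f \<in> borel_measurable lborel" and fin: "Q f < \<infinity>"
  shows "fibint f"
proof -
  have f2[measurable]: "f \<in> borel_measurable ((lborel::complex measure) \<Otimes>\<^sub>M (lborel::real measure))"
    using assms by (simp add: lborel_prod)
  have m: "(\<lambda>p. indicator {0..pi} (snd p) * ennreal ((cmod (f p))\<^sup>2)) \<in> borel_measurable ((lborel::complex measure) \<Otimes>\<^sub>M (lborel::real measure))"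
    by measurable
  have "AE z in lborel. (\<integral>\<^sup>+t. indicator {0..pi} t * ennreal ((cmod (f (z, t)))\<^sup>2) \<partial>lborel) \<noteq> \<infinity>"
    using fin unfolding Q_fibres[OF assms(1)]
    by (intro nn_integral_PInf_AE) (use lborel.borel_measurable_nn_integral_fst[OF m] in auto)
  then show ?thesis unfolding fibint_def
  proof (rule eventually_mono)
    fix z assume "(\<integral>\<^sup>+t. indicator {0..pi} t * ennreal ((cmod (f (z, t)))\<^sup>2) \<partial>lborel) \<noteq> \<infinity>"
    then show "set_integrable lborel {0..pi} (\<lambda>s. f (z, s))"
      by (intro sq_int_imp_int) (auto simp: top.not_eq_extremum)
  qed
qed

lemma fibint_all: "(\<And>z. set_integrable lborel {0..pi} (\<lambda>s. f (z, s))) \<Longrightarrow> fibint f"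
  by (simp add: fibint_def)

lemma Pav_diff:
  assumes "fibint f" "fibint g"
  shows "AE p in lborel. Pav (\<lambda>p. f p - g p) p = Pav f p - Pav g p"
proof -
  have "AE z in lborel. set_integrable lborel {0..pi} (\<lambda>s. f (z, s)) \<and> set_integrable lborel {0..pi} (\<lambda>s. g (z, s))"
    using assms unfolding fibint_def by eventually_elim auto
  then have "AE p in (lborel::hpt measure). set_integrable lborel {0..pi} (\<lambda>s. f (fst p, s)) \<and> set_integrable lborel {0..pi} (\<lambda>s. g (fst p, s))"
    by (rule AE_fst)
  then show ?thesis
    by eventually_elim (simp add: Pav_def diff_divide_distrib)
qed

lemma Pav_AE:
  assumes [measurable]: "f \<in> borel_measurable lborel" "g \<in> borel_measurable lborel"
    and ae: "AE p in lborel. p \<in> fdom \<longrightarrow> f p = g p"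
  shows "AE p in lborel. Pav f p = Pav g p"
proof -
  have "AE p in (lborel::complex measure) \<Otimes>\<^sub>M (lborel::real measure). p \<in> fdom \<longrightarrow> f p = g p"
    by (subst lborel_prod) (rule ae)
  from lborel_pair.AE_pair[OF this]
  have "AE z in lborel. AE t in lborel. (z, t) \<in> fdom \<longrightarrow> f (z, t) = g (z, t)" by simp
  then have "AE z in lborel. (LINT s:{0..pi}|lborel. f (z, s)) = (LINT s:{0..pi}|lborel. g (z, s))"
  proof (rule eventually_mono)
    fix z assume h: "AE t in lborel. (z, t) \<in> fdom \<longrightarrow> f (z, t) = g (z, t)"
    have mf: "(\<lambda>s. f (z, s)) \<in> borel_measurable lborel" and mg: "(\<lambda>s. g (z, s)) \<in> borel_measurable lborel"
      using assms(1,2) by (simp_all add: lborel_prod[symmetric])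
    have mf': "(\<lambda>s. indicator {0..pi} s *\<^sub>R f (z, s)) \<in> borel_measurable lborel"
      by (intro borel_measurable_scaleR borel_measurable_indicator mf) simp
    have mg': "(\<lambda>s. indicator {0..pi} s *\<^sub>R g (z, s)) \<in> borel_measurable lborel"
      by (intro borel_measurable_scaleR borel_measurable_indicator mg) simp
    have ae2: "AE s in lborel. indicator {0..pi} s *\<^sub>R f (z, s) = indicator {0..pi} s *\<^sub>R g (z, s)"
      using eventually_conj[OF h AE_lborel_singleton[of pi]]
    proof (rule eventually_mono)
      fix s assume hs: "((z, s) \<in> fdom \<longrightarrow> f (z, s) = g (z, s)) \<and> s \<noteq> pi"
      show "indicator {0..pi} s *\<^sub>R f (z, s) = indicator {0..pi} s *\<^sub>R g (z, s)"
      proof (cases "s \<in> {0..pi}")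
        case True
        then have "(z, s) \<in> fdom" using hs by (auto simp: fdom_def)
        then show ?thesis using hs by simp
      qed simp
    qed
    show "(LINT s:{0..pi}|lborel. f (z, s)) = (LINT s:{0..pi}|lborel. g (z, s))"
      unfolding set_lebesgue_integral_def by (rule integral_cong_AE[OF mf' mg' ae2])
  qed
  then have "AE p in (lborel::hpt measure). (LINT s:{0..pi}|lborel. f (fst p, s)) = (LINT s:{0..pi}|lborel. g (fst p, s))"
    by (rule AE_fst)
  then show ?thesis by eventually_elim (simp add: Pav_def)
qed

lemma Pav_tindep:
  assumes "\<And>z t. X (z, t) = X (z, 0)"
  shows "Pav X p = X p"
proof -
  have e: "(\<lambda>s. X (fst p, s)) = (\<lambda>s. X (fst p, 0))" using assms by auto
  have "Pav X p = (LINT s:{0..pi}|lborel. X (fst p, 0)) / pi"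
    unfolding Pav_def e ..
  also have "\<dots> = X (fst p, 0)"
    by (subst set_integral_const) (auto simp: measure_def scaleR_conv_of_real)
  also have "\<dots> = X p" using assms[of "fst p" "snd p"] by simp
  finally show ?thesis .
qed

lemma jensen_fibre:
  fixes u :: "real \<Rightarrow> complex"
  assumes [measurable]: "u \<in> borel_measurable lborel"
  shows "ennreal (pi * (cmod ((LINT s:{0..pi}|lborel. u s) / pi))\<^sup>2)
     \<le> (\<integral>\<^sup>+t. indicator {0..pi} t * ennreal ((cmod (u t))\<^sup>2) \<partial>lborel)"
proof -
  define I where "I = (LINT s:{0..pi}|lborel. u s)"
  define A where "A = (\<integral>\<^sup>+t. indicator {0..pi} t * ennreal ((cmod (u t))\<^sup>2) \<partial>lborel)"
  have I1: "ennreal (cmod I) \<le> (\<integral>\<^sup>+t. ennreal (indicator {0..pi} t * cmod (u t)) * indicator {0..pi} t \<partial>lborel)"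
  proof (cases "set_integrable lborel {0..pi} u")
    case True
    have "ennreal (cmod I) \<le> (\<integral>\<^sup>+t. norm (indicator {0..pi} t *\<^sub>R u t) \<partial>lborel)"
      unfolding I_def set_lebesgue_integral_def
      using True unfolding set_integrable_def
      by (intro integral_norm_bound_ennreal)
    also have "\<dots> = (\<integral>\<^sup>+t. ennreal (indicator {0..pi} t * cmod (u t)) * indicator {0..pi} t \<partial>lborel)"
      by (intro nn_integral_cong) (auto simp: indicator_def)
    finally show ?thesis .
  next
    case False
    then have "I = 0" unfolding I_def set_lebesgue_integral_def set_integrable_def
      by (rule not_integrable_integral_eq)
    then show ?thesis by simp
  qed
  have CS: "(\<integral>\<^sup>+t. ennreal (indicator {0..pi} t * cmod (u t)) * indicator {0..pi} t \<partial>lborel)\<^sup>2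
     \<le> (\<integral>\<^sup>+t. (ennreal (indicator {0..pi} t * cmod (u t)))\<^sup>2 \<partial>lborel) * (\<integral>\<^sup>+t. (indicator {0..pi} t)\<^sup>2 \<partial>lborel)"
    by (rule Cauchy_Schwarz_nn_integral) measurable
  have e1: "(\<integral>\<^sup>+t. (ennreal (indicator {0..pi} t * cmod (u t)))\<^sup>2 \<partial>lborel) = A"
    unfolding A_def by (intro nn_integral_cong) (auto simp: indicator_def ennreal_power)
  have e2: "(\<integral>\<^sup>+t. (indicator {0..pi} t)\<^sup>2 \<partial>lborel) = ennreal pi"
  proof -
    have "(\<integral>\<^sup>+t. (indicator {0..pi} t)\<^sup>2 \<partial>lborel) = (\<integral>\<^sup>+t. indicator {0..pi} t \<partial>lborel)"
      by (intro nn_integral_cong) (auto simp: indicator_def)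
    then show ?thesis by simp
  qed
  have "(ennreal (cmod I))\<^sup>2 \<le> A * ennreal pi"
    using order_trans[OF power_mono[OF I1] CS] e1 e2 by simp
  then have key: "ennreal ((cmod I)\<^sup>2) \<le> A * ennreal pi" by (simp add: ennreal_power)
  show ?thesis
  proof (cases "A = \<infinity>")
    case True then show ?thesis unfolding A_def[symmetric] by simp
  next
    case False
    then obtain a where a: "A = ennreal a" "0 \<le> a" by (cases A) auto
    have "(cmod I)\<^sup>2 \<le> a * pi" using key a by (simp add: ennreal_mult[symmetric])
    then have "pi * (cmod (I / pi))\<^sup>2 \<le> a"
      by (simp add: norm_divide power_divide field_simps power2_eq_square)
    then show ?thesis unfolding A_def[symmetric] I_def[symmetric] using a by (simp add: ennreal_leI)
  qed
qed

lemma Pav_contr: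
  assumes [measurable]: "f \<in> borel_measurable lborel"
  shows "Q (Pav f) \<le> Q f"
proof -
  have "Q (Pav f) = (\<integral>\<^sup>+z. (\<integral>\<^sup>+t. indicator {0..pi} t * ennreal ((cmod (Pav f (z, t)))\<^sup>2) \<partial>lborel) \<partial>lborel)"
    by (rule Q_fibres[OF Pav_meas[OF assms]])
  also have "\<dots> = (\<integral>\<^sup>+z. ennreal (pi * (cmod ((LINT s:{0..pi}|lborel. f (z, s)) / pi))\<^sup>2) \<partial>lborel)"
  proof (intro nn_integral_cong)
    fix z
    have "(\<integral>\<^sup>+t. indicator {0..pi} t * ennreal ((cmod (Pav f (z, t)))\<^sup>2) \<partial>lborel)
       = (\<integral>\<^sup>+t. ennreal ((cmod (Pav f (z, 0)))\<^sup>2) * indicator {0..pi} t \<partial>lborel)"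
      by (intro nn_integral_cong) (simp add: Pav_def mult.commute)
    also have "\<dots> = ennreal ((cmod (Pav f (z, 0)))\<^sup>2) * ennreal pi"
      by (subst nn_integral_cmult_indicator) auto
    finally show "(\<integral>\<^sup>+t. indicator {0..pi} t * ennreal ((cmod (Pav f (z, t)))\<^sup>2) \<partial>lborel)
       = ennreal (pi * (cmod ((LINT s:{0..pi}|lborel. f (z, s)) / pi))\<^sup>2)"
      by (simp add: Pav_def ennreal_mult[symmetric] mult.commute)
  qed
  also have "\<dots> \<le> (\<integral>\<^sup>+z. (\<integral>\<^sup>+t. indicator {0..pi} t * ennreal ((cmod (f (z, t)))\<^sup>2) \<partial>lborel) \<partial>lborel)"
  proof (intro nn_integral_mono jensen_fibre)
    fix z
    show "(\<lambda>s. f (z, s)) \<in> borel_measurable lborel"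
      using assms by (simp add: lborel_prod[symmetric])
  qed
  also have "\<dots> = Q f" by (rule Q_fibres[symmetric]) simp
  finally show ?thesis .
qed


lemma cont_quot:
  fixes f :: "'a::euclidean_space \<Rightarrow> 'b::euclidean_space" and g :: "'b \<Rightarrow> 'c::euclidean_space"
  assumes S: "compact S" and f: "continuous_on S f" and gf: "continuous_on S (\<lambda>x. g (f x))"
  shows "continuous_on (f ` S) g"
proof -
  have q: "quotient_map (top_of_set S) (top_of_set (f ` S)) f"
    unfolding quotient_map_def
  proof (intro conjI allI impI)
    show "f ` topspace (top_of_set S) = topspace (top_of_set (f ` S))" by simp
    fix U assume "U \<subseteq> topspace (top_of_set (f ` S))"
    then have U: "U \<subseteq> f ` S" by simp
    have "{x \<in> topspace (top_of_set S). f x \<in> U} = S \<inter> f -` U" by auto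
    then show "openin (top_of_set S) {x \<in> topspace (top_of_set S). f x \<in> U} = openin (top_of_set (f ` S)) U"
      using Abstract_Topology_2.continuous_imp_quotient_map[OF f refl S U] by simp
  qed
  have "continuous_map (top_of_set S) euclidean (g \<circ> f)"
    using gf by (simp add: o_def)
  then have "continuous_map (top_of_set (f ` S)) euclidean g"
    by (rule continuous_compose_quotient_map[OF q])
  then show ?thesis by simp
qed

lemma cis2_inj:
  assumes t0: "t0 \<in> {0..pi}" and t1: "t1 \<in> {0..pi}" and eq: "cis (2 * t0) = cis (2 * t1)"
  shows "t0 = t1 \<or> (t0 \<in> {0, pi} \<and> t1 \<in> {0, pi})"
proof -
  have "exp (\<i> * complex_of_real (2 * t0)) = exp (\<i> * complex_of_real (2 * t1))"
    using eq by (simp add: cis_conv_exp)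
  then obtain n :: int where n: "\<i> * complex_of_real (2 * t0) = \<i> * complex_of_real (2 * t1) + (of_int (2 * n) * pi) * \<i>"
    unfolding exp_eq by blast
  then have "2 * t0 = 2 * t1 + 2 * n * pi"
    by (simp add: complex_eq_iff)
  then have d: "t0 - t1 = n * pi" by simp
  have "\<bar>t0 - t1\<bar> \<le> pi" using t0 t1 by auto
  then have "\<bar>real_of_int n\<bar> * pi \<le> pi" by (simp add: d abs_mult)
  then have "\<bar>real_of_int n\<bar> \<le> 1" by simp
  then have "n = 0 \<or> n = 1 \<or> n = -1" by linarith
  then show ?thesis
  proof (elim disjE)
    assume "n = 0" then show ?thesis using d by simp
  next
    assume "n = 1" then have "t0 = t1 + pi" using d by simp
    then show ?thesis using t0 t1 by auto
  next
    assume "n = -1" then have "t1 = t0 + pi" using d by simp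
    then show ?thesis using t0 t1 by auto
  qed
qed

lemma bfun0_le1: "bfun 0 x \<le> 1"
  by (simp add: bfun_def)

lemma bfun0_nonneg: "0 \<le> bfun 0 x"
  by (simp add: bfun_def)

lemma bfun0_pos: "x > 0 \<Longrightarrow> bfun 0 x > 0"
  by (simp add: bfun_def)

lemma bfun0_zero: "x \<le> 0 \<Longrightarrow> bfun 0 x = 0"
  by (simp add: bfun_def)

lemma bfun0_cont: "continuous_on A (bfun 0)"
proof -
  have "\<And>x. isCont (bfun 0) x"
    using smooth1_bfun unfolding smooth1_def
    by (metis DERIV_isCont)
  then show ?thesis by (simp add: continuous_at_imp_continuous_on)
qed

definition chi :: "real \<Rightarrow> hpt \<Rightarrow> complex" where
  "chi c p = complex_of_real (bfun 0 (c - (Re (fst p))\<^sup>2 - (Im (fst p))\<^sup>2))"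

lemma Kalg_chi: "Kalg (chi c)"
proof -
  have "Kalg (\<lambda>p. complex_of_real (bfun 0 (Re ((\<lambda>p. complex_of_real c
      + (- 1) * (complex_of_real (Re (fst p)) * complex_of_real (Re (fst p)))
      + (- 1) * (complex_of_real (Im (fst p)) * complex_of_real (Im (fst p)))) p))))"
    by (intro Kalg.Kcomp smooth1_bfun Kalg.Kadd Kalg.Kmult Kalg.Kconst Kalg.Kre Kalg.Kim)
  then show ?thesis unfolding chi_def by (simp add: power2_eq_square)
qed

lemma chi_cmod: "chi c p = complex_of_real (bfun 0 (c - (cmod (fst p))\<^sup>2))"
  by (simp add: chi_def cmod_power2 diff_diff_eq)

definition Dapx :: "(hpt \<Rightarrow> complex) \<Rightarrow> bool" where
  "Dapx F \<longleftrightarrow> (\<exists>c u f'. Kz u \<and> E0alg f' \<and> F = (\<lambda>p. chi c p * (u (fst p) + f' p)))"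


lemma B_sets: "cball (0::complex) R \<times> {0..<pi} \<in> sets (lborel::hpt measure)"
proof -
  have "cball (0::complex) R \<times> {0..<pi} \<in> sets ((lborel::complex measure) \<Otimes>\<^sub>M (lborel::real measure))"
    by (intro pair_measureI) auto
  then show ?thesis unfolding lborel_prod by simp
qed

lemma Q_le_box:
  assumes b: "\<And>p. p \<in> fdom \<Longrightarrow> cmod (G p) \<le> (if cmod (fst p) \<le> R then eta else 0)" and eta: "0 \<le> eta"
  shows "Q G \<le> ennreal (eta\<^sup>2) * emeasure lborel (cball (0::complex) R \<times> {0..<pi})"
proof -
  have "Q G \<le> (\<integral>\<^sup>+p. ennreal (eta\<^sup>2) * indicator (cball (0::complex) R \<times> {0..<pi}) p \<partial>lborel)"
    unfolding Q_def
  proof (intro nn_integral_mono)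
    fix p :: hpt
    show "indicator fdom p * ennreal ((cmod (G p))\<^sup>2) \<le> ennreal (eta\<^sup>2) * indicator (cball 0 R \<times> {0..<pi}) p"
    proof (cases "p \<in> fdom")
      case True
      then have p: "snd p \<in> {0..<pi}" by (auto simp: fdom_def)
      show ?thesis
      proof (cases "cmod (fst p) \<le> R")
        case True
        then have "cmod (G p) \<le> eta" using b[OF \<open>p \<in> fdom\<close>] by simp
        then have "(cmod (G p))\<^sup>2 \<le> eta\<^sup>2" by (intro power_mono) auto
        moreover have "p \<in> cball 0 R \<times> {0..<pi}" using True p by (cases p) auto
        ultimately show ?thesis using \<open>p \<in> fdom\<close> by (simp add: ennreal_leI)
      next
        case False
        then have "G p = 0" using b[OF \<open>p \<in> fdom\<close>] by simp
        then show ?thesis by simp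
      qed
    qed simp
  qed
  also have "\<dots> = ennreal (eta\<^sup>2) * emeasure lborel (cball (0::complex) R \<times> {0..<pi})"
    by (rule nn_integral_cmult_indicator[OF B_sets])
  finally show ?thesis .
qed

lemma D1_core:
  fixes g :: "hpt \<Rightarrow> complex"
  assumes gc: "continuous_on UNIV g" and gper: "\<And>z. g (z, pi) = g (z, 0)"
    and gsupp: "\<And>z t. R0 \<le> cmod z \<Longrightarrow> g (z, t) = 0" and e: "0 < e"
  shows "\<exists>F. Dapx F \<and> Q (\<lambda>p. g p - F p) < ennreal e"
proof -
  define R where "R = max R0 0 + 1"
  define R1 where "R1 = max R0 0 + 1/2"
  define c where "c = R\<^sup>2"
  have R1pos: "0 < R1" and R1R: "R1 < R" and R0R1: "R0 < R1" unfolding R_def R1_def by auto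
  have cR1: "R1\<^sup>2 < c" unfolding c_def using R1pos R1R by (intro power_strict_mono) auto
  define den where "den z = bfun 0 (c - min ((cmod z)\<^sup>2) (R1\<^sup>2))" for z :: complex
  have denpos: "den z > 0" for z
    unfolding den_def using cR1 by (intro bfun0_pos) linarith
  have dencont: "continuous_on UNIV den"
    unfolding den_def by (intro continuous_on_compose2[OF bfun0_cont] continuous_intros) auto
  define \<tau> where "\<tau> p = g p * complex_of_real (1 / den (fst p))" for p
  have \<tau>c: "continuous_on UNIV \<tau>"
    unfolding \<tau>_def using denpos
    by (intro continuous_intros gc continuous_on_compose2[OF dencont]) (auto intro!: continuous_intros simp: less_imp_neq[symmetric])
  have gchi: "g p = chi c p * \<tau> p" for p
  proof (cases "g p = 0")
    case True then show ?thesis by (simp add: \<tau>_def)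
  next
    case False
    then have "cmod (fst p) < R0" using gsupp[of "fst p" "snd p"] by (cases p) (auto simp: not_le[symmetric])
    then have "(cmod (fst p))\<^sup>2 < R1\<^sup>2" using R0R1 by (intro power_strict_mono) auto
    then have "den (fst p) = bfun 0 (c - (cmod (fst p))\<^sup>2)" unfolding den_def by simp
    then show ?thesis using denpos[of "fst p"]
      by (simp add: \<tau>_def chi_cmod field_simps)
  qed
  have \<tau>per: "\<tau> (z, pi) = \<tau> (z, 0)" for z by (simp add: \<tau>_def gper)
  define \<Phi> where "\<Phi> p = (fst p, cis (2 * snd p))" for p :: hpt
  define Sd where "Sd = cball (0::complex) R \<times> {0..pi}"
  have Sdc: "compact Sd" unfolding Sd_def by (intro compact_Times) auto
  have \<Phi>c: "continuous_on UNIV \<Phi>" unfolding \<Phi>_def by (intro continuous_intros)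
  define tt where "tt w = (SOME t. t \<in> {0..pi} \<and> cis (2 * t) = w)" for w
  define \<tau>' where "\<tau>' q = \<tau> (fst q, tt (snd q))" for q
  have wd: "\<tau>' (\<Phi> p) = \<tau> p" if "p \<in> Sd" for p
  proof -
    obtain z t0 where p: "p = (z, t0)" by fastforce
    have t0: "t0 \<in> {0..pi}" using that p by (auto simp: Sd_def)
    have "\<exists>t. t \<in> {0..pi} \<and> cis (2 * t) = cis (2 * t0)" using t0 by blast
    then have t1: "tt (cis (2 * t0)) \<in> {0..pi}" "cis (2 * tt (cis (2 * t0))) = cis (2 * t0)"
      unfolding tt_def by (metis (mono_tags, lifting) someI_ex)+
    from cis2_inj[OF t0 t1(1) t1(2)[symmetric]]
    have "\<tau> (z, tt (cis (2 * t0))) = \<tau> (z, t0)"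
      using \<tau>per by auto
    then show ?thesis by (simp add: \<tau>'_def \<Phi>_def p)
  qed
  have \<tau>'c: "continuous_on (\<Phi> ` Sd) \<tau>'"
  proof (rule cont_quot[OF Sdc])
    show "continuous_on Sd \<Phi>" using \<Phi>c by (rule continuous_on_subset) auto
    show "continuous_on Sd (\<lambda>x. \<tau>' (\<Phi> x))"
      using continuous_on_subset[OF \<tau>c, of Sd] by (rule continuous_on_cong[THEN iffD1, rotated 2]) (auto simp: wd)
  qed
  have S'c: "compact (\<Phi> ` Sd)"
    by (rule compact_continuous_image[OF continuous_on_subset[OF \<Phi>c] Sdc]) auto
  define m where "m = measure lborel (cball (0::complex) R \<times> {0..<pi})"
  have m0: "0 \<le> m" unfolding m_def by simp
  have mfin: "emeasure lborel (cball (0::complex) R \<times> {0..<pi}) = ennreal m"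
  proof -
    have "bounded (cball (0::complex) R \<times> {0..<pi})" by (intro bounded_Times) auto
    then have "emeasure lborel (cball (0::complex) R \<times> {0..<pi}) < \<infinity>" by (rule emeasure_bounded_finite)
    then show ?thesis unfolding m_def by (simp add: emeasure_eq_ennreal_measure)
  qed
  define \<eta> where "\<eta> = sqrt (e / (m + 1))"
  have \<eta>pos: "0 < \<eta>" unfolding \<eta>_def using e m0 by simp
  have \<eta>m: "\<eta>\<^sup>2 * m < e"
  proof -
    have "\<eta>\<^sup>2 = e / (m + 1)" unfolding \<eta>_def using e m0 by simp
    then have eq: "\<eta>\<^sup>2 * m + \<eta>\<^sup>2 = e" using m0 by (simp add: field_simps)
    have "0 < \<eta>\<^sup>2" using \<eta>pos by simp
    then show ?thesis using eq by linarith
  qed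
  have "\<exists>h. Calg h \<and> (\<forall>x\<in>\<Phi> ` Sd. \<bar>Re (\<tau>' x) - Re (h x)\<bar> < \<eta> / 2)"
    by (rule Psw_approx[OF S'c continuous_on_Re[OF \<tau>'c]]) (use \<eta>pos in simp)
  then obtain h1 where h1: "Calg h1" "\<And>x. x \<in> \<Phi> ` Sd \<Longrightarrow> \<bar>Re (\<tau>' x) - Re (h1 x)\<bar> < \<eta> / 2"
    by blast
  have "\<exists>h. Calg h \<and> (\<forall>x\<in>\<Phi> ` Sd. \<bar>Im (\<tau>' x) - Re (h x)\<bar> < \<eta> / 2)"
    by (rule Psw_approx[OF S'c continuous_on_Im[OF \<tau>'c]]) (use \<eta>pos in simp)
  then obtain h2 where h2: "Calg h2" "\<And>x. x \<in> \<Phi> ` Sd \<Longrightarrow> \<bar>Im (\<tau>' x) - Re (h2 x)\<bar> < \<eta> / 2"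
    by blast
  define h where "h q = (1/2) * (h1 q + cnj (h1 q)) + (\<i>/2) * (h2 q + cnj (h2 q))" for q
  have hC: "Calg h" unfolding h_def
    by (intro Calg.Cadd Calg.Cmult Calg.Cconst Calg_cnj h1(1) h2(1))
  have hRe: "Re (h q) = Re (h1 q)" and hIm: "Im (h q) = Re (h2 q)" for q
    by (simp_all add: h_def)
  have happ: "cmod (\<tau>' q - h q) < \<eta>" if "q \<in> \<Phi> ` Sd" for q
  proof -
    have "cmod (\<tau>' q - h q) \<le> \<bar>Re (\<tau>' q - h q)\<bar> + \<bar>Im (\<tau>' q - h q)\<bar>" by (rule cmod_le)
    also have "\<dots> < \<eta> / 2 + \<eta> / 2" using h1(2)[OF that] h2(2)[OF that] by (simp add: hRe hIm)
    finally show ?thesis by simp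
  qed
  define H where "H p = h (fst p, cis (2 * snd p))" for p
  have "Ealg H" unfolding H_def by (rule Calg_pullback[OF hC])
  then obtain u f' where uf: "Kz u" "E0alg f'" "H = (\<lambda>p. u (fst p) + f' p)"
    using Ealg_decomp by blast
  define F where "F p = chi c p * H p" for p
  have DF: "Dapx F" unfolding Dapx_def F_def using uf by blast
  have bnd: "cmod (g p - F p) \<le> (if cmod (fst p) \<le> R then \<eta> else 0)" if "p \<in> fdom" for p
  proof (cases "cmod (fst p) \<le> R")
    case True
    then have pS: "p \<in> Sd" using that by (cases p) (auto simp: Sd_def fdom_def)
    have w: "\<tau>' (\<Phi> p) = \<tau> p" by (rule wd[OF pS])
    have H\<Phi>: "H p = h (\<Phi> p)" by (simp add: H_def \<Phi>_def)
    have "g p - F p = chi c p * (\<tau>' (\<Phi> p) - h (\<Phi> p))"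
      unfolding w H\<Phi>[symmetric] F_def by (subst gchi) (simp add: algebra_simps)
    then have "cmod (g p - F p) = cmod (chi c p) * cmod (\<tau>' (\<Phi> p) - h (\<Phi> p))"
      by (simp add: norm_mult)
    also have "\<dots> \<le> 1 * \<eta>"
    proof (intro mult_mono)
      show "cmod (chi c p) \<le> 1" by (simp add: chi_def bfun0_le1 bfun0_nonneg)
      show "cmod (\<tau>' (\<Phi> p) - h (\<Phi> p)) \<le> \<eta>" using happ[of "\<Phi> p"] pS by auto
    qed (use \<eta>pos in auto)
    finally show ?thesis using True by simp
  next
    case False
    then have "R0 \<le> cmod (fst p)" unfolding R_def by auto
    then have g0: "g p = 0" using gsupp[of "fst p" "snd p"] by simp
    have "(cmod (fst p))\<^sup>2 > R\<^sup>2" using False R1pos R1R by (intro power_strict_mono) auto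
    then have "chi c p = 0" unfolding chi_cmod c_def by (simp add: bfun0_zero)
    then show ?thesis using g0 False by (simp add: F_def)
  qed
  have "Q (\<lambda>p. g p - F p) \<le> ennreal (\<eta>\<^sup>2) * emeasure lborel (cball (0::complex) R \<times> {0..<pi})"
    by (rule Q_le_box[OF bnd]) (use \<eta>pos in auto)
  also have "\<dots> = ennreal (\<eta>\<^sup>2 * m)" by (simp add: mfin ennreal_mult m0)
  also have "\<dots> < ennreal e" using \<eta>m e by (simp add: ennreal_lessI)
  finally show ?thesis using DF by blast
qed


lemma Q_dom_conv:
  fixes s :: "nat \<Rightarrow> hpt \<Rightarrow> complex"
  assumes [measurable]: "\<And>i. s i \<in> borel_measurable lborel" "s' \<in> borel_measurable lborel"
    "w \<in> borel_measurable lborel"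
    and wfin: "(\<integral>\<^sup>+p. indicator fdom p * ennreal (w p) \<partial>lborel) < \<infinity>"
    and bound: "\<And>i. AE p in lborel. p \<in> fdom \<longrightarrow> (cmod (s' p - s i p))\<^sup>2 \<le> w p"
    and conv: "AE p in lborel. p \<in> fdom \<longrightarrow> (\<lambda>i. s i p) \<longlonglongrightarrow> s' p"
    and e: "0 < e"
  shows "\<exists>i. Q (\<lambda>p. s' p - s i p) < ennreal e"
proof -
  define u where "u i p = indicator fdom p * ennreal ((cmod (s' p - s i p))\<^sup>2)" for i p
  have um: "u i \<in> borel_measurable lborel" for i
    unfolding u_def by (rule Qint_meas) measurable
  define W where "W = (\<lambda>p. indicator fdom p * ennreal (w p))"
  have p3: "W \<in> borel_measurable lborel" unfolding W_def by measurable
  have p4: "AE p in lborel. u i p \<le> W p" for i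
    using bound[of i] by eventually_elim (auto simp: u_def W_def indicator_def ennreal_leI)
  have p5: "integral\<^sup>N lborel W < \<infinity>" using wfin by (simp add: W_def)
  have p6: "AE p in lborel. (\<lambda>i. u i p) \<longlonglongrightarrow> 0"
    using conv
  proof eventually_elim
    case (elim p)
    show ?case
    proof (cases "p \<in> fdom")
      case True
      then have "(\<lambda>i. s i p) \<longlonglongrightarrow> s' p" using elim by simp
      then have "(\<lambda>i. s' p - s i p) \<longlonglongrightarrow> s' p - s' p"
        by (intro tendsto_diff tendsto_const)
      then have "(\<lambda>i. s' p - s i p) \<longlonglongrightarrow> 0" by simp
      then have "(\<lambda>i. (cmod (s' p - s i p))\<^sup>2) \<longlonglongrightarrow> 0"
        using tendsto_power[OF tendsto_norm_zero, of _ _ 2] by force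
      then have "(\<lambda>i. ennreal ((cmod (s' p - s i p))\<^sup>2)) \<longlonglongrightarrow> ennreal 0"
        by (rule tendsto_ennrealI)
      then show ?thesis using True by (simp add: u_def)
    qed (simp add: u_def)
  qed
  have lim: "(\<lambda>i. integral\<^sup>N lborel (u i)) \<longlonglongrightarrow> integral\<^sup>N lborel (\<lambda>p. 0)"
    using nn_integral_dominated_convergence[of u lborel "\<lambda>p. 0" W, OF um _ p3 p4 p5 p6] by simp
  have ueq: "u i = (\<lambda>p. indicator fdom p * ennreal ((cmod (s' p - s i p))\<^sup>2))" for i
    by (rule ext) (simp add: u_def)
  from lim have "(\<lambda>i. Q (\<lambda>p. s' p - s i p)) \<longlonglongrightarrow> 0" by (simp add: ueq Q_def)
  from order_tendstoD(2)[OF this, of "ennreal e"] e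
  have "eventually (\<lambda>i. Q (\<lambda>p. s' p - s i p) < ennreal e) sequentially" by simp
  then show ?thesis by (auto simp: eventually_sequentially)
qed

definition clipr :: "real \<Rightarrow> real \<Rightarrow> real" where
  "clipr k x = max (- k) (min k x)"

definition clipc :: "real \<Rightarrow> complex \<Rightarrow> complex" where
  "clipc k w = Complex (clipr k (Re w)) (clipr k (Im w))"

lemma clipc_cont: "continuous_on UNIV (clipc k)"
  unfolding clipc_def clipr_def
  by (intro continuous_intros continuous_on_Complex) 

lemma continuous_on_Complex':
  "continuous_on A f \<Longrightarrow> continuous_on A g \<Longrightarrow> continuous_on A (\<lambda>x. Complex (f x) (g x))"
  by (rule continuous_on_Complex)

lemma clipc_norm: "0 \<le> k \<Longrightarrow> cmod (clipc k w) \<le> cmod w"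
proof -
  assume k: "0 \<le> k"
  have a: "\<bar>clipr k x\<bar> \<le> \<bar>x\<bar>" for x using k by (auto simp: clipr_def)
  have "(cmod (clipc k w))\<^sup>2 \<le> (cmod w)\<^sup>2"
    unfolding cmod_power2 clipc_def using a[of "Re w"] a[of "Im w"]
    by (simp add: add_mono power_mono abs_le_square_iff)
  then show ?thesis by (simp add: abs_le_square_iff[symmetric])
qed

lemma clipc_bound: "0 \<le> k \<Longrightarrow> cmod (clipc k w) \<le> 2 * k"
proof -
  assume k: "0 \<le> k"
  have "cmod (clipc k w) \<le> \<bar>Re (clipc k w)\<bar> + \<bar>Im (clipc k w)\<bar>" by (rule cmod_le)
  also have "\<dots> \<le> k + k" using k by (auto simp: clipc_def clipr_def)
  finally show ?thesis by simp
qed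

lemma clipc_id: "\<bar>Re w\<bar> \<le> k \<Longrightarrow> \<bar>Im w\<bar> \<le> k \<Longrightarrow> clipc k w = w"
  by (auto simp: clipc_def clipr_def complex_eq_iff)

definition nuf :: "real \<Rightarrow> real \<Rightarrow> real" where
  "nuf k t = max 0 (min 1 (min (k * t) (k * (pi - t))))"

definition psi :: "real \<Rightarrow> hpt \<Rightarrow> complex" where
  "psi k p = complex_of_real (max 0 (min 1 (k - cmod (fst p))) * nuf k (snd p))"

lemma psi_cont: "continuous_on UNIV (psi k)"
  unfolding psi_def nuf_def by (intro continuous_intros)

lemma psi_bound: "cmod (psi k p) \<le> 1"
  unfolding psi_def norm_of_real by (auto simp: nuf_def abs_mult intro!: mult_le_one)

lemma psi_zero_out: "k \<le> cmod (fst p) \<Longrightarrow> psi k p = 0"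
  by (simp add: psi_def)

lemma psi_ends: "0 \<le> k \<Longrightarrow> psi k (z, 0) = 0" "0 \<le> k \<Longrightarrow> psi k (z, pi) = 0"
  by (auto simp: psi_def nuf_def)

lemma psi_one:
  assumes "cmod (fst p) + 1 \<le> k" "0 < snd p" "snd p < pi" "1 / snd p \<le> k" "1 / (pi - snd p) \<le> k"
  shows "psi k p = 1"
proof -
  have "1 \<le> k * snd p" using assms(2,4) by (simp add: field_simps)
  moreover have "1 \<le> k * (pi - snd p)" using assms(3,5) by (simp add: field_simps)
  ultimately have "nuf k (snd p) = 1" by (simp add: nuf_def)
  moreover have "max 0 (min 1 (k - cmod (fst p))) = 1" using assms(1) by simp
  ultimately show ?thesis by (simp add: psi_def)
qed

lemma AE_snd_ne0: "AE p in (lborel::hpt measure). snd p \<noteq> 0"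
proof -
  have "UNIV \<times> {0} \<in> null_sets ((lborel::complex measure) \<Otimes>\<^sub>M (lborel::real measure))"
    by (intro lborel.times_in_null_sets2) auto
  then have "UNIV \<times> {0} \<in> null_sets (lborel::hpt measure)" by (simp add: lborel_prod)
  then show ?thesis by (rule AE_I') auto
qed

lemma D2_step1:
  assumes [measurable]: "f \<in> borel_measurable lborel" and fin: "Q f < \<infinity>" and e: "0 < e"
  shows "\<exists>n::nat. Q (\<lambda>p. f p - clipc (real n) (f p) * psi (real n) p) < ennreal e"
proof (rule Q_dom_conv[where s="\<lambda>n p. clipc (real n) (f p) * psi (real n) p" and w="\<lambda>p. 4 * (cmod (f p))\<^sup>2"])
  show "(\<lambda>p. clipc (real n) (f p) * psi (real n) p) \<in> borel_measurable lborel" for n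
  proof -
    have "psi (real n) \<in> borel_measurable lborel"
      using borel_measurable_continuous_onI[OF psi_cont] by simp
    then show ?thesis
      by (intro borel_measurable_times borel_measurable_continuous_on[OF clipc_cont] assms)
  qed
  show "f \<in> borel_measurable lborel" by simp
  show "(\<lambda>p. 4 * (cmod (f p))\<^sup>2) \<in> borel_measurable lborel" by measurable
  have "(\<integral>\<^sup>+p. indicator fdom p * ennreal (4 * (cmod (f p))\<^sup>2) \<partial>lborel) = 4 * Q f"
    unfolding Q_def
    by (subst nn_integral_cmult[symmetric]) (auto intro!: nn_integral_cong simp: ennreal_mult mult_ac)
  then show "(\<integral>\<^sup>+p. indicator fdom p * ennreal (4 * (cmod (f p))\<^sup>2) \<partial>lborel) < \<infinity>"
    using fin by (simp add: ennreal_mult_less_top)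
  show "AE p in lborel. p \<in> fdom \<longrightarrow> (cmod (f p - clipc (real n) (f p) * psi (real n) p))\<^sup>2 \<le> 4 * (cmod (f p))\<^sup>2" for n
  proof (intro AE_I2 impI)
    fix p
    have "cmod (clipc (real n) (f p) * psi (real n) p) \<le> cmod (f p) * 1"
      unfolding norm_mult by (intro mult_mono clipc_norm psi_bound) auto
    then have "cmod (f p - clipc (real n) (f p) * psi (real n) p) \<le> 2 * cmod (f p)"
      using norm_triangle_ineq4[of "f p" "clipc (real n) (f p) * psi (real n) p"] by linarith
    then have "(cmod (f p - clipc (real n) (f p) * psi (real n) p))\<^sup>2 \<le> (2 * cmod (f p))\<^sup>2"
      by (intro power_mono) auto
    then show "(cmod (f p - clipc (real n) (f p) * psi (real n) p))\<^sup>2 \<le> 4 * (cmod (f p))\<^sup>2"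
      by (simp add: power_mult_distrib)
  qed
  show "AE p in lborel. p \<in> fdom \<longrightarrow> (\<lambda>n. clipc (real n) (f p) * psi (real n) p) \<longlonglongrightarrow> f p"
    using AE_snd_ne0
  proof eventually_elim
    case (elim p)
    show ?case
    proof
      assume "p \<in> fdom"
      then have t: "0 < snd p" "snd p < pi" using elim by (auto simp: fdom_def)
      define K where "K = max (max (cmod (fst p) + 1) (max (1 / snd p) (1 / (pi - snd p)))) (max \<bar>Re (f p)\<bar> \<bar>Im (f p)\<bar>)"
      obtain N :: nat where N: "K \<le> real N" using real_arch_simple by blast
      have "clipc (real n) (f p) * psi (real n) p = f p" if "N \<le> n" for n
      proof -
        have Kn: "K \<le> real n" using N that by linarith
        have "psi (real n) p = 1" using Kn t by (intro psi_one) (auto simp: K_def)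
        moreover have "clipc (real n) (f p) = f p" using Kn by (intro clipc_id) (auto simp: K_def)
        ultimately show ?thesis by simp
      qed
      then show "(\<lambda>n. clipc (real n) (f p) * psi (real n) p) \<longlonglongrightarrow> f p"
        by (intro tendsto_eventually) (auto simp: eventually_sequentially)
    qed
  qed
qed (rule e)


lemma fk_meas:
  assumes [measurable]: "f \<in> borel_measurable lborel"
  shows "(\<lambda>p. clipc k (f p) * psi k p) \<in> borel_measurable lborel"
proof -
  have "psi k \<in> borel_measurable lborel"
    using borel_measurable_continuous_onI[OF psi_cont] by simp
  then show ?thesis
    by (intro borel_measurable_times borel_measurable_continuous_on[OF clipc_cont] assms)
qed

lemma cont_meas: "continuous_on UNIV (g :: hpt \<Rightarrow> complex) \<Longrightarrow> g \<in> borel_measurable lborel"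
  using borel_measurable_continuous_onI by simp

lemma D2_step2:
  assumes [measurable]: "f \<in> borel_measurable lborel" and e: "0 < e" and k: "0 \<le> k"
  shows "\<exists>g. continuous_on UNIV g \<and> (\<forall>z. g (z, pi) = g (z, 0)) \<and> (\<forall>z t. k \<le> cmod z \<longrightarrow> g (z, t) = 0)
     \<and> Q (\<lambda>p. clipc k (f p) * psi k p - g p) < ennreal e"
proof -
  have "f \<in> borel_measurable lebesgue" by (rule measurable_completion) simp
  then have "f measurable_on UNIV"
    by (rule lebesgue_measurable_imp_measurable_on) simp
  then obtain N \<phi> where N: "negligible N" and \<phi>c: "\<And>j. continuous_on UNIV (\<phi> j)"
    and \<phi>l: "\<And>x. x \<notin> N \<Longrightarrow> (\<lambda>j. \<phi> j x) \<longlonglongrightarrow> f x"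
    unfolding measurable_on_def by auto
  have "AE x in lebesgue. x \<notin> N"
    using N by (intro AE_not_in) (simp add: negligible_iff_null_sets)
  then have aeN: "AE x in lborel. x \<notin> N" by (simp add: AE_completion_iff)
  define s where "s j p = clipc k (\<phi> j p) * psi k p" for j p
  have sc: "continuous_on UNIV (s j)" for j
    unfolding s_def
    by (intro continuous_intros continuous_on_compose2[OF clipc_cont \<phi>c] psi_cont) auto
  define w where "w p = 16 * k\<^sup>2 * indicator (cball (0::complex) k \<times> UNIV) p" for p :: hpt
  have "\<exists>j. Q (\<lambda>p. clipc k (f p) * psi k p - s j p) < ennreal e"
  proof (rule Q_dom_conv[where w=w])
    show "s j \<in> borel_measurable lborel" for j by (rule cont_meas[OF sc])
    show "(\<lambda>p. clipc k (f p) * psi k p) \<in> borel_measurable lborel" by (rule fk_meas) simp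
    have Bs: "cball (0::complex) k \<times> UNIV \<in> sets (lborel::hpt measure)"
    proof -
      have "cball (0::complex) k \<times> UNIV \<in> sets ((lborel::complex measure) \<Otimes>\<^sub>M (lborel::real measure))"
        by (intro pair_measureI) auto
      then show ?thesis unfolding lborel_prod by simp
    qed
    show "w \<in> borel_measurable lborel" unfolding w_def using Bs by measurable
    have "(\<integral>\<^sup>+p. indicator fdom p * ennreal (w p) \<partial>lborel)
        = (\<integral>\<^sup>+p. ennreal (16 * k\<^sup>2) * indicator (cball (0::complex) k \<times> {0..<pi}) p \<partial>lborel)"
      by (intro nn_integral_cong) (auto simp: w_def fdom_def indicator_def)
    also have "\<dots> = ennreal (16 * k\<^sup>2) * emeasure lborel (cball (0::complex) k \<times> {0..<pi})"
      by (rule nn_integral_cmult_indicator[OF B_sets])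
    also have "\<dots> < \<infinity>"
    proof -
      have "bounded (cball (0::complex) k \<times> {0..<pi})" by (intro bounded_Times) auto
      then have "emeasure lborel (cball (0::complex) k \<times> {0..<pi}) < \<infinity>" by (rule emeasure_bounded_finite)
      then show ?thesis by (simp add: ennreal_mult_less_top)
    qed
    finally show "(\<integral>\<^sup>+p. indicator fdom p * ennreal (w p) \<partial>lborel) < \<infinity>" .
    show "AE p in lborel. p \<in> fdom \<longrightarrow> (cmod (clipc k (f p) * psi k p - s j p))\<^sup>2 \<le> w p" for j
    proof (intro AE_I2 impI)
      fix p :: hpt
      show "(cmod (clipc k (f p) * psi k p - s j p))\<^sup>2 \<le> w p"
      proof (cases "cmod (fst p) < k")
        case True
        have "cmod (clipc k (f p) * psi k p) \<le> 2 * k * 1"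
          unfolding norm_mult by (intro mult_mono clipc_bound psi_bound k) (use k in auto)
        moreover have "cmod (s j p) \<le> 2 * k * 1"
          unfolding norm_mult s_def by (intro mult_mono clipc_bound psi_bound k) (use k in auto)
        ultimately have "cmod (clipc k (f p) * psi k p - s j p) \<le> 4 * k"
          using norm_triangle_ineq4[of "clipc k (f p) * psi k p" "s j p"] by linarith
        then have "(cmod (clipc k (f p) * psi k p - s j p))\<^sup>2 \<le> (4 * k)\<^sup>2"
          by (intro power_mono) auto
        moreover have "p \<in> cball 0 k \<times> UNIV" using True by (cases p) auto
        ultimately show ?thesis by (simp add: w_def power_mult_distrib)
      next
        case False
        then have "psi k p = 0" by (intro psi_zero_out) simp
        then show ?thesis by (simp add: s_def w_def)
      qed
    qed
    show "AE p in lborel. p \<in> fdom \<longrightarrow> (\<lambda>j. s j p) \<longlonglongrightarrow> clipc k (f p) * psi k p"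
      using aeN
    proof eventually_elim
      case (elim p)
      have "(\<lambda>j. clipc k (\<phi> j p)) \<longlonglongrightarrow> clipc k (f p)"
        by (rule isCont_tendsto_compose[OF _ \<phi>l[OF elim]])
           (use clipc_cont in \<open>simp add: continuous_on_eq_continuous_at\<close>)
      then have "(\<lambda>j. clipc k (\<phi> j p) * psi k p) \<longlonglongrightarrow> clipc k (f p) * psi k p"
        by (intro tendsto_mult tendsto_const)
      then show ?case by (simp add: s_def)
    qed
  qed (rule e)
  then obtain j where j: "Q (\<lambda>p. clipc k (f p) * psi k p - s j p) < ennreal e" by blast
  show ?thesis
  proof (intro exI conjI allI impI)
    show "continuous_on UNIV (s j)" by (rule sc)
    show "s j (z, pi) = s j (z, 0)" for z using psi_ends[OF k] by (simp add: s_def)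
    show "s j (z, t) = 0" if "k \<le> cmod z" for z t using psi_zero_out[of k "(z, t)"] that by (simp add: s_def)
  qed (rule j)
qed

lemma ennreal_quarter:
  assumes "a < ennreal (e/8)" "b < ennreal (e/8)" "0 < e"
  shows "2 * a + 2 * b < ennreal e"
proof -
  have "2 * a + 2 * b \<le> 2 * ennreal (e/8) + 2 * ennreal (e/8)"
    using assms by (intro add_mono mult_left_mono) auto
  also have "\<dots> = ennreal (e/2)"
  proof -
    have a: "2 * ennreal (e/8) = ennreal (e/4)" using ennreal_mult[of 2 "e/8"] assms(3) by simp
    have b: "ennreal (e/4) + ennreal (e/4) = ennreal (e/2)" using ennreal_plus[of "e/4" "e/4"] assms(3) by simp
    show ?thesis by (simp only: a b)
  qed
  also have "\<dots> < ennreal e" using assms(3) by (simp add: ennreal_lessI)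
  finally show ?thesis .
qed

lemma D2_density:
  assumes [measurable]: "f \<in> borel_measurable lborel" and fin: "Q f < \<infinity>" and e: "0 < e"
  shows "\<exists>g R0. continuous_on UNIV g \<and> (\<forall>z. g (z, pi) = g (z, 0)) \<and> (\<forall>z t. R0 \<le> cmod z \<longrightarrow> g (z, t) = 0)
     \<and> Q (\<lambda>p. f p - g p) < ennreal e"
proof -
  have e8: "0 < e / 8" using e by simp
  obtain n :: nat where n: "Q (\<lambda>p. f p - clipc (real n) (f p) * psi (real n) p) < ennreal (e / 8)"
    using D2_step1[OF assms(1) fin e8] by blast
  obtain g where g: "continuous_on UNIV g" "\<forall>z. g (z, pi) = g (z, 0)" "\<forall>z t. real n \<le> cmod z \<longrightarrow> g (z, t) = 0"
     "Q (\<lambda>p. clipc (real n) (f p) * psi (real n) p - g p) < ennreal (e / 8)"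
    using D2_step2[OF assms(1) e8, of "real n"] by auto
  have "Q (\<lambda>p. f p - g p) \<le> 2 * Q (\<lambda>p. f p - clipc (real n) (f p) * psi (real n) p)
      + 2 * Q (\<lambda>p. clipc (real n) (f p) * psi (real n) p - g p)"
    by (rule Q_tri[OF assms(1) fk_meas[OF assms(1)] cont_meas[OF g(1)]])
  also have "\<dots> < ennreal e" by (rule ennreal_quarter[OF n g(4) e])
  finally show ?thesis using g by blast
qed

lemma Dapx_Kalg: "Dapx F \<Longrightarrow> Kalg F"
proof -
  assume "Dapx F"
  then obtain c u f' where h: "Kz u" "E0alg f'" "F = (\<lambda>p. chi c p * (u (fst p) + f' p))"
    unfolding Dapx_def by blast
  have "Kalg (\<lambda>p. chi c p * (u (fst p) + f' p))"
  proof -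
    have k1: "Kalg (\<lambda>p. u (fst p))" using h(1) by (simp add: Kz_def)
    have k2: "Kalg f'" by (rule E0alg_Kalg[OF h(2)])
    show ?thesis by (intro Kalg.Kmult Kalg.Kadd Kalg_chi k1 k2)
  qed
  then show ?thesis using h(3) by simp
qed

lemma Kalg_meas: "Kalg F \<Longrightarrow> F \<in> borel_measurable lborel"
  by (intro cont_meas Kalg_continuous)

lemma density:
  assumes [measurable]: "f \<in> borel_measurable lborel" and fin: "Q f < \<infinity>" and e: "0 < e"
  shows "\<exists>F. Dapx F \<and> Q (\<lambda>p. f p - F p) < ennreal e"
proof -
  have e8: "0 < e / 8" using e by simp
  obtain g R0 where g: "continuous_on UNIV g" "\<forall>z. g (z, pi) = g (z, 0)" "\<forall>z t. R0 \<le> cmod z \<longrightarrow> g (z, t) = 0"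
     "Q (\<lambda>p. f p - g p) < ennreal (e / 8)"
    using D2_density[OF assms(1) fin e8] by blast
  obtain F where F: "Dapx F" "Q (\<lambda>p. g p - F p) < ennreal (e / 8)"
    using D1_core[OF g(1) _ _ e8, of R0] g(2,3) by blast
  have "Q (\<lambda>p. f p - F p) \<le> 2 * Q (\<lambda>p. f p - g p) + 2 * Q (\<lambda>p. g p - F p)"
    by (rule Q_tri[OF assms(1) cont_meas[OF g(1)] Kalg_meas[OF Dapx_Kalg[OF F(1)]]])
  also have "\<dots> < ennreal e" by (rule ennreal_quarter[OF g(4) F(2) e])
  finally show ?thesis using F by blast
qed


lemma cis_int0:
  fixes k :: int
  assumes k: "k \<noteq> 0"
  shows "(LINT s:{0..pi}|lborel. cis (2 * of_int k * s)) = 0"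
proof -
  define a where "a = 2 * real_of_int k"
  have a0: "a \<noteq> 0" using k by (simp add: a_def)
  define F where "F s = exp (\<i> * complex_of_real a * complex_of_real s) / (\<i> * complex_of_real a)" for s
  have d: "(F has_vector_derivative cis (a * x)) (at x within {0..pi})" for x
  proof -
    have "((\<lambda>w. exp (\<i> * complex_of_real a * w) / (\<i> * complex_of_real a)) has_field_derivative
          (exp (\<i> * complex_of_real a * complex_of_real x) * (\<i> * complex_of_real a) / (\<i> * complex_of_real a)))
          (at (complex_of_real x))"
      by (auto intro!: derivative_eq_intros)
    then have "((\<lambda>s. exp (\<i> * complex_of_real a * complex_of_real s) / (\<i> * complex_of_real a)) has_vector_derivative
          (exp (\<i> * complex_of_real a * complex_of_real x) * (\<i> * complex_of_real a) / (\<i> * complex_of_real a)))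
          (at x within {0..pi})"
      by (rule has_vector_derivative_real_field)
    moreover have "exp (\<i> * complex_of_real a * complex_of_real x) * (\<i> * complex_of_real a) / (\<i> * complex_of_real a)
        = cis (a * x)"
      using a0 by (simp add: cis_conv_exp mult.assoc)
    ultimately show ?thesis unfolding F_def by simp
  qed
  have c: "continuous_on {0..pi} (\<lambda>s. cis (a * s))"
    by (intro continuous_intros)
  have "(LINT s:{0..pi}|lborel. cis (a * s)) = F pi - F 0"
    unfolding set_lebesgue_integral_def
    by (rule integral_FTC_atLeastAtMost[OF _ d c]) auto
  also have "\<dots> = 0"
  proof -
    have "exp (\<i> * complex_of_real a * complex_of_real pi) = cis (2 * pi * real_of_int k)"
      by (simp add: cis_conv_exp a_def mult_ac)
    also have "\<dots> = 1" by (rule cis_multiple_2pi) simp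
    finally show ?thesis by (simp add: F_def)
  qed
  finally show ?thesis by (simp add: a_def)
qed

lemma cont_int_0pi:
  assumes "continuous_on UNIV (g :: real \<Rightarrow> complex)" shows "set_integrable lborel {0..pi} g"
  by (rule borel_integrable_atLeastAtMost'[OF continuous_on_subset[OF assms subset_UNIV]])

lemma Kalg_fibre_int:
  assumes "Kalg g" shows "set_integrable lborel {0..pi} (\<lambda>s. g (z, s))"
proof -
  have "continuous_on UNIV (\<lambda>s::real. (z, s))" by (intro continuous_intros)
  then have "continuous_on UNIV (\<lambda>s. g (z, s))"
    using continuous_on_compose[of UNIV "\<lambda>s::real. (z, s)" g] Kalg_continuous[OF assms]
    by (simp add: o_def continuous_on_subset)
  then show ?thesis by (rule cont_int_0pi)
qed

lemma E0alg_fibre: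
  assumes "E0alg f'"
  shows "(LINT s:{0..pi}|lborel. w z * f' (z, s)) = 0"
  using assms
proof induction
  case E0zero
  then show ?case by simp
next
  case (E0pure v k)
  have "(LINT s:{0..pi}|lborel. w z * (v (fst (z, s)) * cis (2 * of_int k * snd (z, s))))
      = w z * v z * (LINT s:{0..pi}|lborel. cis (2 * of_int k * s))"
  proof -
    have "(\<lambda>s. w z * (v (fst (z, s)) * cis (2 * of_int k * snd (z, s)))) = (\<lambda>s. (w z * v z) * cis (2 * of_int k * s))"
      by (rule ext) (simp add: mult.assoc)
    then show ?thesis by (simp only: set_integral_mult_right)
  qed
  also have "\<dots> = 0" using cis_int0[OF E0pure(2)] by simp
  finally show ?case .
next
  case (E0add f g)
  have i1: "set_integrable lborel {0..pi} (\<lambda>s. w z * f (z, s))"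
    using Kalg_fibre_int[OF Kalg.Kmult[OF Kalg.Kconst E0alg_Kalg[OF E0add(1)]], of "w z" z] by simp
  have i2: "set_integrable lborel {0..pi} (\<lambda>s. w z * g (z, s))"
    using Kalg_fibre_int[OF Kalg.Kmult[OF Kalg.Kconst E0alg_Kalg[OF E0add(2)]], of "w z" z] by simp
  have "(LINT s:{0..pi}|lborel. w z * (f (z, s) + g (z, s)))
      = (LINT s:{0..pi}|lborel. w z * f (z, s)) + (LINT s:{0..pi}|lborel. w z * g (z, s))"
    unfolding distrib_left by (rule set_integral_add(2)[OF i1 i2])
  then show ?case using E0add.IH by (cases "w z = 0") auto
qed

lemma E0alg_periodic: "E0alg f' \<Longrightarrow> f' (z, t + pi) = f' (z, t)"
proof (induction rule: E0alg.induct)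
  case (E0pure v k)
  have "cis (2 * of_int k * (t + pi)) = cis (2 * of_int k * t) * cis (2 * pi * of_int k)"
    by (simp add: cis_mult algebra_simps)
  also have "cis (2 * pi * of_int k) = 1" by (rule cis_multiple_2pi) simp
  finally show ?case by simp
qed auto

lemma Kz_periodic: "(\<lambda>p. u (fst p)) (z, t + pi) = (\<lambda>p. u (fst p)) (z, t)" by simp

lemma chi_fst: "chi c (z, t) = chi c (z, 0)" by (simp add: chi_def)

lemma Cc_of:
  assumes "Kz u" "E0alg f'"
  shows "(\<lambda>p. chi c p * (u (fst p) + f' p)) \<in> Cc_inf"
proof -
  have K: "Kalg (\<lambda>p. chi c p * (u (fst p) + f' p))"
  proof -
    have k1: "Kalg (\<lambda>p. u (fst p))" using assms(1) by (simp add: Kz_def)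
    have k2: "Kalg f'" by (rule E0alg_Kalg[OF assms(2)])
    show ?thesis by (intro Kalg.Kmult Kalg.Kadd Kalg_chi k1 k2)
  qed
  have per: "pi_periodic (\<lambda>p. chi c p * (u (fst p) + f' p))"
    unfolding pi_periodic_def using E0alg_periodic[OF assms(2)] by (simp add: chi_def)
  have supp: "\<forall>z t. sqrt \<bar>c\<bar> < cmod z \<longrightarrow> chi c (z, t) * (u (fst (z, t)) + f' (z, t)) = 0"
  proof (intro allI impI)
    fix z t assume "sqrt \<bar>c\<bar> < cmod z"
    then have "(sqrt \<bar>c\<bar>)\<^sup>2 < (cmod z)\<^sup>2" by (intro power_strict_mono) auto
    then have "c \<le> (cmod z)\<^sup>2" by simp
    then have "chi c (z, t) = 0" by (simp add: chi_cmod bfun0_zero)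
    then show "chi c (z, t) * (u (fst (z, t)) + f' (z, t)) = 0" by simp
  qed
  show ?thesis unfolding Cc_inf_def mem_Collect_eq
    by (intro conjI Kalg_smooth[OF K] per exI[of _ "sqrt \<bar>c\<bar>"] supp)
qed

lemma smooth_cont:
  assumes "smooth_fun f" shows "continuous_on UNIV f"
proof -
  have "\<forall>x. f differentiable (at x)" using assms by (rule smooth_fun.cases) simp
  then have "\<forall>x\<in>UNIV. isCont f x" by (simp add: differentiable_imp_continuous_within)
  then show ?thesis by (rule continuous_at_imp_continuous_on)
qed

lemma Cc_L2H:
  assumes "f \<in> Cc_inf"
  shows "f \<in> L2H"
proof -
  obtain R where sm: "smooth_fun f" and per: "pi_periodic f" and R: "\<And>z t. R < cmod z \<Longrightarrow> f (z, t) = 0"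
    using assms unfolding Cc_inf_def by blast
  have c: "continuous_on UNIV f" by (rule smooth_cont[OF sm])
  have "compact (cball (0::complex) R \<times> {0..pi})" by (intro compact_Times) auto
  then have "bounded (f ` (cball 0 R \<times> {0..pi}))"
    by (intro compact_imp_bounded compact_continuous_image continuous_on_subset[OF c]) auto
  then obtain M0 where M0: "\<And>p. p \<in> cball 0 R \<times> {0..pi} \<Longrightarrow> cmod (f p) \<le> M0"
    unfolding bounded_iff by auto
  define M where "M = max M0 0"
  have M: "\<And>p. p \<in> cball 0 R \<times> {0..pi} \<Longrightarrow> cmod (f p) \<le> M"
    using M0 unfolding M_def by (meson max.coboundedI1)
  have M0: "0 \<le> M" unfolding M_def by simp
  have "Q f \<le> ennreal (M\<^sup>2) * emeasure lborel (cball (0::complex) R \<times> {0..<pi})"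
  proof (rule Q_le_box)
    fix p :: hpt assume p: "p \<in> fdom"
    show "cmod (f p) \<le> (if cmod (fst p) \<le> R then M else 0)"
    proof (cases "cmod (fst p) \<le> R")
      case True
      then have "p \<in> cball 0 R \<times> {0..pi}" using p by (cases p) (auto simp: fdom_def)
      then show ?thesis using M True by auto
    next
      case False then show ?thesis using R[of "fst p" "snd p"] by simp
    qed
  qed (rule M0)
  also have "\<dots> < \<infinity>"
  proof -
    have "bounded (cball (0::complex) R \<times> {0..<pi})" by (intro bounded_Times) auto
    then have "emeasure lborel (cball (0::complex) R \<times> {0..<pi}) < \<infinity>" by (rule emeasure_bounded_finite)
    then show ?thesis by (simp add: ennreal_mult_less_top)
  qed
  finally show ?thesis
    unfolding L2H_iff using cont_meas[OF c] per by blast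
qed

lemma Pav_F:
  assumes "Kz u" "E0alg f'"
  shows "Pav (\<lambda>p. chi c p * (u (fst p) + f' p)) p = chi c p * u (fst p)"
proof -
  obtain z t where p: "p = (z, t)" by fastforce
  have i1: "set_integrable lborel {0..pi} (\<lambda>s. chi c (z, s) * u z)"
    using Kalg_fibre_int[OF Kalg.Kmult[OF Kalg_chi, of "\<lambda>p. u (fst p)"], of c z] assms(1)
    by (simp add: Kz_def)
  have i2: "set_integrable lborel {0..pi} (\<lambda>s. chi c (z, 0) * f' (z, s))"
    using Kalg_fibre_int[OF Kalg.Kmult[OF Kalg.Kconst E0alg_Kalg[OF assms(2)]], of "chi c (z, 0)" z] by simp
  have e: "(\<lambda>s. chi c (z, s) * (u z + f' (z, s))) = (\<lambda>s. chi c (z, s) * u z + chi c (z, 0) * f' (z, s))"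
    by (rule ext) (simp add: distrib_left chi_def)
  have "(LINT s:{0..pi}|lborel. chi c (z, s) * (u z + f' (z, s)))
      = (LINT s:{0..pi}|lborel. chi c (z, s) * u z) + (LINT s:{0..pi}|lborel. chi c (z, 0) * f' (z, s))"
    unfolding e by (rule set_integral_add(2)[OF i1 i2])
  also have "(LINT s:{0..pi}|lborel. chi c (z, 0) * f' (z, s)) = 0"
    using E0alg_fibre[OF assms(2), of "\<lambda>z. chi c (z, 0)" z] by simp
  also have "(LINT s:{0..pi}|lborel. chi c (z, s) * u z) = (LINT s:{0..pi}|lborel. chi c (z, 0) * u z)"
    by (simp add: chi_def)
  also have "\<dots> = pi * (chi c (z, 0) * u z)"
    by (subst set_integral_const) (auto simp: measure_def scaleR_conv_of_real)
  finally have I: "(LINT s:{0..pi}|lborel. chi c (z, s) * (u z + f' (z, s))) = pi * (chi c (z, 0) * u z)" by simp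
  have "Pav (\<lambda>p. chi c p * (u (fst p) + f' p)) p = (LINT s:{0..pi}|lborel. chi c (z, s) * (u z + f' (z, s))) / pi"
    unfolding Pav_def p by simp
  also have "\<dots> = chi c (z, 0) * u z" unfolding I by simp
  also have "\<dots> = chi c p * u (fst p)" by (simp add: p chi_def)
  finally show ?thesis .
qed


lemma hmul_t: "hmul (z, t) q = (fst (hmul (z, 0) q), snd (hmul (z, 0) q) + t)"
  by (simp add: hmul_def)

lemma xray_tindep:
  assumes "\<And>p q. fst p = fst q \<Longrightarrow> F p = F q"
  shows "xray a b F (z, t) = xray a b F (z, 0)"
proof -
  have "F (hmul (z, t) q) = F (hmul (z, 0) q)" for q
    by (rule assms) (simp add: hmul_def)
  then show ?thesis unfolding xray_def by simp
qed

lemma gamma_cont: "continuous_on UNIV (gamma_r r)"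
  unfolding gamma_r_def divide_inverse by (intro continuous_intros)

lemma hmul_cont: "continuous_on UNIV (\<lambda>s. hmul p (g s))" if "continuous_on UNIV g" for g :: "real \<Rightarrow> hpt"
  unfolding hmul_def using that by (intro continuous_intros) auto

lemma xray_integrable:
  assumes "Kalg F"
  shows "set_integrable lborel {0..L} (\<lambda>s. F (hmul p (gamma_r r s)))"
proof -
  have "continuous_on UNIV (\<lambda>s. hmul p (gamma_r r s))" by (rule hmul_cont[OF gamma_cont])
  then have "continuous_on UNIV (\<lambda>s. F (hmul p (gamma_r r s)))"
    using continuous_on_compose[of UNIV "\<lambda>s. hmul p (gamma_r r s)" F] Kalg_continuous[OF assms]
    by (simp add: o_def continuous_on_subset)
  then show ?thesis
    by (rule borel_integrable_atLeastAtMost'[OF continuous_on_subset[OF _ subset_UNIV]])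
qed

lemma xray_add:
  assumes "Kalg F1" "Kalg F2"
  shows "xray a b (\<lambda>p. F1 p + F2 p) p = xray a b F1 p + xray a b F2 p"
  unfolding xray_def
  by (rule set_integral_add(2)[OF xray_integrable[OF assms(1)] xray_integrable[OF assms(2)]])

lemma xray_pure:
  assumes "\<And>p. F p = W (fst p) * cis (2 * of_int k * snd p)"
  shows "xray a b F (z, t) = cis (2 * of_int k * t) * xray a b F (z, 0)"
proof -
  have e: "F (hmul (z, t) q) = cis (2 * of_int k * t) * F (hmul (z, 0) q)" for q
  proof -
    have "F (hmul (z, t) q) = W (fst (hmul (z, 0) q)) * cis (2 * of_int k * (snd (hmul (z, 0) q) + t))"
      by (subst hmul_t) (simp add: assms)
    also have "\<dots> = cis (2 * of_int k * t) * (W (fst (hmul (z, 0) q)) * cis (2 * of_int k * snd (hmul (z, 0) q)))"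
    proof -
      have c: "cis (2 * of_int k * (x + t)) = cis (2 * of_int k * t) * cis (2 * of_int k * x)" for x
        by (simp add: cis_mult distrib_left add.commute)
      show ?thesis unfolding c by (rule mult.left_commute)
    qed
    also have "\<dots> = cis (2 * of_int k * t) * F (hmul (z, 0) q)" by (simp add: assms)
    finally show ?thesis .
  qed
  show ?thesis unfolding xray_def e by (rule set_integral_mult_right)
qed

lemma xray_E0:
  assumes "E0alg f'"
  shows "set_integrable lborel {0..pi} (\<lambda>t. xray a b (\<lambda>p. chi c p * f' p) (z, t))
     \<and> (LINT t:{0..pi}|lborel. xray a b (\<lambda>p. chi c p * f' p) (z, t)) = 0"
  using assms
proof induction
  case E0zero
  show ?case by (simp add: xray_def set_integrable_def)
next
  case (E0pure v k)
  define W where "W z = chi c (z, 0) * v z" for z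
  have F: "chi c p * (v (fst p) * cis (2 * of_int k * snd p)) = W (fst p) * cis (2 * of_int k * snd p)" for p
    by (cases p) (simp add: W_def chi_def)
  have x: "xray a b (\<lambda>p. chi c p * (v (fst p) * cis (2 * of_int k * snd p))) (z, t)
      = cis (2 * of_int k * t) * xray a b (\<lambda>p. chi c p * (v (fst p) * cis (2 * of_int k * snd p))) (z, 0)" for t
    by (rule xray_pure) (rule F)
  define C where "C = xray a b (\<lambda>p. chi c p * (v (fst p) * cis (2 * of_int k * snd p))) (z, 0)"
  have i: "set_integrable lborel {0..pi} (\<lambda>t. cis (2 * of_int k * t) * C)"
    by (rule borel_integrable_atLeastAtMost') (intro continuous_intros)
  have "(LINT t:{0..pi}|lborel. cis (2 * of_int k * t) * C) = C * (LINT t:{0..pi}|lborel. cis (2 * of_int k * t))"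
    by (subst mult.commute) (rule set_integral_mult_right)
  also have "\<dots> = 0" using cis_int0[OF E0pure(2)] by simp
  finally have I0: "(LINT t:{0..pi}|lborel. cis (2 * of_int k * t) * C) = 0" .
  have xe: "(\<lambda>t. xray a b (\<lambda>p. chi c p * (v (fst p) * cis (2 * of_int k * snd p))) (z, t))
      = (\<lambda>t. cis (2 * of_int k * t) * C)"
    by (rule ext) (unfold C_def, rule x)
  show ?case unfolding xe using i I0 by blast
next
  case (E0add f g)
  have kf: "Kalg (\<lambda>p. chi c p * f p)" by (intro Kalg.Kmult Kalg_chi E0alg_Kalg E0add(1))
  have kg: "Kalg (\<lambda>p. chi c p * g p)" by (intro Kalg.Kmult Kalg_chi E0alg_Kalg E0add(2))
  have e: "xray a b (\<lambda>p. chi c p * (f p + g p)) (z, t)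
       = xray a b (\<lambda>p. chi c p * f p) (z, t) + xray a b (\<lambda>p. chi c p * g p) (z, t)" for t
    unfolding distrib_left by (rule xray_add[OF kf kg])
  show ?case
    using set_integral_add[OF E0add.IH(1)[THEN conjunct1] E0add.IH(2)[THEN conjunct1]]
      E0add.IH(1)[THEN conjunct2] E0add.IH(2)[THEN conjunct2]
    by (simp add: e)
qed


lemma Pav_L2C:
  assumes fm: "f \<in> borel_measurable lborel" and ae: "ae_eq f (\<lambda>p. h (fst p))"
  shows "AE p in lborel. p \<in> fdom \<longrightarrow> Pav f p = f p"
proof -
  have ae': "AE p in lborel. p \<in> fdom \<longrightarrow> f p = h (fst p)" using ae by (simp add: ae_eq_def)
  have "AE p in (lborel::complex measure) \<Otimes>\<^sub>M (lborel::real measure). p \<in> fdom \<longrightarrow> f p = h (fst p)"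
    by (subst lborel_prod) (rule ae')
  from lborel_pair.AE_pair[OF this]
  have "AE z in lborel. AE t in lborel. (z, t) \<in> fdom \<longrightarrow> f (z, t) = h z" by simp
  then have "AE z in lborel. Pav f (z, 0) = h z"
  proof (rule eventually_mono)
    fix z assume hz: "AE t in lborel. (z, t) \<in> fdom \<longrightarrow> f (z, t) = h z"
    have mf: "(\<lambda>s. f (z, s)) \<in> borel_measurable lborel"
      using fm by (simp add: lborel_prod[symmetric])
    have mf': "(\<lambda>s. indicator {0..pi} s *\<^sub>R f (z, s)) \<in> borel_measurable lborel"
      by (intro borel_measurable_scaleR borel_measurable_indicator mf) simp
    have mc: "(\<lambda>s. indicator {0..pi} s *\<^sub>R h z) \<in> borel_measurable lborel"
      by (intro borel_measurable_scaleR borel_measurable_indicator) simp_all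
    have ae2: "AE s in lborel. indicator {0..pi} s *\<^sub>R f (z, s) = indicator {0..pi} s *\<^sub>R h z"
      using eventually_conj[OF hz AE_lborel_singleton[of pi]]
    proof (rule eventually_mono)
      fix s assume hs: "((z, s) \<in> fdom \<longrightarrow> f (z, s) = h z) \<and> s \<noteq> pi"
      show "indicator {0..pi} s *\<^sub>R f (z, s) = indicator {0..pi} s *\<^sub>R h z"
      proof (cases "s \<in> {0..pi}")
        case True
        then have "(z, s) \<in> fdom" using hs by (auto simp: fdom_def)
        then show ?thesis using hs by simp
      qed simp
    qed
    have "(LINT s:{0..pi}|lborel. f (z, s)) = (LINT s:{0..pi}|lborel. h z)"
      unfolding set_lebesgue_integral_def by (rule integral_cong_AE[OF mf' mc ae2])
    also have "\<dots> = pi * h z"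
      by (subst set_integral_const) (auto simp: measure_def scaleR_conv_of_real)
    finally show "Pav f (z, 0) = h z" by (simp add: Pav_def)
  qed
  then have "AE p in (lborel::hpt measure). Pav f (fst p, 0) = h (fst p)" by (rule AE_fst)
  then show ?thesis using ae'
    by eventually_elim (simp add: Pav_def)
qed

lemma Pav_AE_fib:
  assumes mf: "\<And>z. (\<lambda>s. indicator {0..pi} s *\<^sub>R f (z, s)) \<in> borel_measurable lborel"
    and mg: "\<And>z. (\<lambda>s. indicator {0..pi} s *\<^sub>R g (z, s)) \<in> borel_measurable lborel"
    and ae: "AE p in lborel. p \<in> fdom \<longrightarrow> f p = g p"
  shows "AE p in lborel. Pav f p = Pav g p"
proof -
  have "AE p in (lborel::complex measure) \<Otimes>\<^sub>M (lborel::real measure). p \<in> fdom \<longrightarrow> f p = g p"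
    by (subst lborel_prod) (rule ae)
  from lborel_pair.AE_pair[OF this]
  have "AE z in lborel. AE t in lborel. (z, t) \<in> fdom \<longrightarrow> f (z, t) = g (z, t)" by simp
  then have "AE z in lborel. (LINT s:{0..pi}|lborel. f (z, s)) = (LINT s:{0..pi}|lborel. g (z, s))"
  proof (rule eventually_mono)
    fix z assume h: "AE t in lborel. (z, t) \<in> fdom \<longrightarrow> f (z, t) = g (z, t)"
    have ae2: "AE s in lborel. indicator {0..pi} s *\<^sub>R f (z, s) = indicator {0..pi} s *\<^sub>R g (z, s)"
      using eventually_conj[OF h AE_lborel_singleton[of pi]]
    proof (rule eventually_mono)
      fix s assume hs: "((z, s) \<in> fdom \<longrightarrow> f (z, s) = g (z, s)) \<and> s \<noteq> pi"
      show "indicator {0..pi} s *\<^sub>R f (z, s) = indicator {0..pi} s *\<^sub>R g (z, s)"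
      proof (cases "s \<in> {0..pi}")
        case True
        then have "(z, s) \<in> fdom" using hs by (auto simp: fdom_def)
        then show ?thesis using hs by simp
      qed simp
    qed
    show "(LINT s:{0..pi}|lborel. f (z, s)) = (LINT s:{0..pi}|lborel. g (z, s))"
      unfolding set_lebesgue_integral_def by (rule integral_cong_AE[OF mf mg ae2])
  qed
  then have "AE p in (lborel::hpt measure). (LINT s:{0..pi}|lborel. f (fst p, s)) = (LINT s:{0..pi}|lborel. g (fst p, s))"
    by (rule AE_fst)
  then show ?thesis by eventually_elim (simp add: Pav_def)
qed

lemma fib_meas:
  fixes f :: "hpt \<Rightarrow> complex"
  assumes "f \<in> borel_measurable lborel"
  shows "(\<lambda>s. indicator {0..pi} s *\<^sub>R f (z, s)) \<in> borel_measurable lborel"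
proof -
  have m: "(\<lambda>s. f (z, s)) \<in> borel_measurable lborel"
    using assms by (simp add: lborel_prod[symmetric])
  show ?thesis by (rule borel_measurable_scaleR[OF borel_measurable_indicator m]) simp
qed

lemma eps_zero:
  fixes x :: ennreal
  assumes h: "\<And>e. 0 < e \<Longrightarrow> x \<le> ennreal (K * e)" and K: "0 \<le> K"
  shows "x = 0"
proof -
  have "x \<le> 0 + ennreal e" if e: "0 < e" for e
  proof -
    have "x \<le> ennreal (K * (e / (K + 1)))" using h[of "e / (K + 1)"] e K by simp
    also have "K * (e / (K + 1)) \<le> e" using e K by (simp add: field_simps)
    then have "ennreal (K * (e / (K + 1))) \<le> ennreal e" by (rule ennreal_leI)
    finally show ?thesis by simp
  qed
  then have "x \<le> 0" by (rule ennreal_le_epsilon)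
  then show ?thesis by simp
qed

lemma ennreal_2sum:
  assumes "a \<le> ennreal r" "b \<le> ennreal s" "0 \<le> r" "0 \<le> s"
  shows "2 * a + 2 * b \<le> ennreal (2 * r + 2 * s)"
proof -
  have "2 * a + 2 * b \<le> 2 * ennreal r + 2 * ennreal s"
    using assms by (intro add_mono mult_left_mono) auto
  also have "\<dots> = ennreal (2 * r + 2 * s)"
    using assms by (simp add: ennreal_plus ennreal_mult)
  finally show ?thesis .
qed

lemma L2H_facts:
  assumes "f \<in> L2H"
  shows "f \<in> borel_measurable lborel" "Q f < \<infinity>" "fibint f"
  using assms fibint_Q by (auto simp: L2H_iff)

lemma Dapx_parts:
  assumes "Dapx F"
  obtains c u f' where "Kz u" "E0alg f'" "F = (\<lambda>p. chi c p * (u (fst p) + f' p))"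
  using assms unfolding Dapx_def by blast

theorem mainTheorem1:
  fixes a b :: nat and T :: "(hpt \<Rightarrow> complex) \<Rightarrow> (hpt \<Rightarrow> complex)"
  assumes "0 < a" and "0 < b" and "coprime a b"
    and "bounded_ext_xray a b T"
  shows "(\<forall>f\<in>L2C. T f \<in> L2C) \<and> (\<forall>f\<in>L2zero. T f \<in> L2zero)"
proof -
  have TL: "\<And>f. f \<in> L2H \<Longrightarrow> T f \<in> L2H"
    and agree: "\<And>f. f \<in> Cc_inf \<Longrightarrow> ae_eq (T f) (xray a b f)"
    using assms(4) unfolding bounded_ext_xray_def by auto
  obtain C0 where Clip0: "\<And>f g. f \<in> L2H \<Longrightarrow> g \<in> L2H \<Longrightarrow> Q (\<lambda>p. T f p - T g p) \<le> ennreal C0 * Q (\<lambda>p. f p - g p)"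
    using T_lip[OF assms(4)] by blast
  define C where "C = max C0 0"
  have C0: "0 \<le> C" unfolding C_def by simp
  have eC: "ennreal C0 = ennreal C" unfolding C_def by (cases "0 \<le> C0") (auto simp: ennreal_neg)
  have Clip: "\<And>f g. f \<in> L2H \<Longrightarrow> g \<in> L2H \<Longrightarrow> Q (\<lambda>p. T f p - T g p) \<le> ennreal C * Q (\<lambda>p. f p - g p)"
    using Clip0 eC by metis
  have Tbound: "Q (\<lambda>p. T f p - T G p) \<le> ennreal (C * e)"
    if "f \<in> L2H" "G \<in> L2H" "Q (\<lambda>p. f p - G p) \<le> ennreal e" "0 \<le> e" for f G e
  proof -
    have "Q (\<lambda>p. T f p - T G p) \<le> ennreal C * Q (\<lambda>p. f p - G p)" by (rule Clip[OF that(1,2)])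
    also have "\<dots> \<le> ennreal C * ennreal e" by (intro mult_left_mono that(3)) simp
    also have "\<dots> = ennreal (C * e)" using C0 that(4) by (simp add: ennreal_mult)
    finally show ?thesis .
  qed
  have partA: "T f \<in> L2C" if fC: "f \<in> L2C" for f
  proof -
    have fL: "f \<in> L2H" using fC by (simp add: L2C_def)
    obtain h where fh: "ae_eq f (\<lambda>p. h (fst p))" using fC by (auto simp: L2C_def)
    note ff = L2H_facts[OF fL]
    have TfL: "T f \<in> L2H" by (rule TL[OF fL])
    note Tff = L2H_facts[OF TfL]
    have key: "Q (\<lambda>p. T f p - Pav (T f) p) \<le> ennreal (4 * C * e)" if e: "0 < e" for e
    proof -
      obtain F where F: "Dapx F" "Q (\<lambda>p. f p - F p) < ennreal e"
        using density[OF ff(1,2) e] by blast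
      obtain c u f' where cuf: "Kz u" "E0alg f'" "F = (\<lambda>p. chi c p * (u (fst p) + f' p))"
        using Dapx_parts[OF F(1)] by blast
      define G where "G p = chi c p * u (fst p)" for p
      have GC: "G \<in> Cc_inf"
        using Cc_of[OF cuf(1) E0alg.E0zero, of c] by (simp add: G_def[abs_def])
      have GL: "G \<in> L2H" by (rule Cc_L2H[OF GC])
      note Gf = L2H_facts[OF GL]
      have FK: "Kalg F" by (rule Dapx_Kalg[OF F(1)])
      have Fm: "F \<in> borel_measurable lborel" by (rule Kalg_meas[OF FK])
      have Ffib: "fibint F" by (intro fibint_all Kalg_fibre_int[OF FK])
      have PF: "Pav F p = G p" for p unfolding cuf(3) G_def by (rule Pav_F[OF cuf(1,2)])
      have QfG: "Q (\<lambda>p. f p - G p) \<le> ennreal e"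
      proof -
        have a1: "AE p in lborel. p \<in> fdom \<longrightarrow> Pav f p = f p" by (rule Pav_L2C[OF ff(1) fh])
        have a2: "AE p in lborel. Pav (\<lambda>p. f p - F p) p = Pav f p - Pav F p" by (rule Pav_diff[OF ff(3) Ffib])
        have "Q (\<lambda>p. f p - G p) = Q (Pav (\<lambda>p. f p - F p))"
          by (rule Q_cong_AE) (use a1 a2 in \<open>eventually_elim, simp add: PF\<close>)
        also have "\<dots> \<le> Q (\<lambda>p. f p - F p)" by (rule Pav_contr) (use ff(1) Fm in measurable)
        also have "\<dots> \<le> ennreal e" using F(2) by simp
        finally show ?thesis .
      qed
      define X where "X = xray a b G"
      have TGX: "ae_eq (T G) X" unfolding X_def by (rule agree[OF GC])
      have Xt: "X (z, t) = X (z, 0)" for z t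
        unfolding X_def by (rule xray_tindep) (auto simp: G_def chi_def)
      have TGX': "ae_eq (T G) (\<lambda>p. X (fst p, 0))"
        using TGX unfolding ae_eq_def
      proof (rule eventually_mono)
        fix p assume "p \<in> fdom \<longrightarrow> T G p = X p"
        then show "p \<in> fdom \<longrightarrow> T G p = X (fst p, 0)" using Xt[of "fst p" "snd p"] by (cases p) auto
      qed
      have TGm: "T G \<in> borel_measurable lborel" using L2H_facts[OF TL[OF GL]] by simp
      have aPG: "AE p in lborel. p \<in> fdom \<longrightarrow> Pav (T G) p = T G p" by (rule Pav_L2C[OF TGm TGX'])
      have TfTG: "Q (\<lambda>p. T f p - T G p) \<le> ennreal (C * e)"
        by (rule Tbound[OF fL GL QfG]) (use e in simp)
      have "Q (\<lambda>p. T G p - Pav (T f) p) = Q (Pav (\<lambda>p. T G p - T f p))"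
      proof (rule Q_cong_AE)
        have a2: "AE p in lborel. Pav (\<lambda>p. T G p - T f p) p = Pav (T G) p - Pav (T f) p"
          by (rule Pav_diff[OF L2H_facts(3)[OF TL[OF GL]] Tff(3)])
        show "AE p in lborel. p \<in> fdom \<longrightarrow> T G p - Pav (T f) p = Pav (\<lambda>p. T G p - T f p) p"
          using aPG a2 by eventually_elim auto
      qed
      also have "\<dots> \<le> Q (\<lambda>p. T G p - T f p)" by (rule Pav_contr) (use TGm Tff(1) in measurable)
      also have "\<dots> = Q (\<lambda>p. T f p - T G p)" by (rule Q_commute)
      finally have TGP: "Q (\<lambda>p. T G p - Pav (T f) p) \<le> ennreal (C * e)" using TfTG by simp
      have "Q (\<lambda>p. T f p - Pav (T f) p) \<le> 2 * Q (\<lambda>p. T f p - T G p) + 2 * Q (\<lambda>p. T G p - Pav (T f) p)"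
        by (rule Q_tri[OF Tff(1) TGm Pav_meas[OF Tff(1)]])
      also have "\<dots> \<le> ennreal (2 * (C * e) + 2 * (C * e))"
        by (rule ennreal_2sum[OF TfTG TGP]) (use C0 e in auto)
      finally show ?thesis by (simp add: algebra_simps)
    qed
    have "Q (\<lambda>p. T f p - Pav (T f) p) = 0"
      by (rule eps_zero[of _ "4 * C"]) (use key C0 in auto)
    then have "ae_eq (T f) (Pav (T f))"
      by (subst ae_eq_Q) (use Tff(1) Pav_meas[OF Tff(1)] in auto)
    moreover have "Pav (T f) = (\<lambda>p. (\<lambda>z. Pav (T f) (z, 0)) (fst p))"
      by (rule ext) (simp add: Pav_def)
    ultimately have "ae_eq (T f) (\<lambda>p. (\<lambda>z. Pav (T f) (z, 0)) (fst p))" by simp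
    then show "T f \<in> L2C" using TfL unfolding L2C_def
      by (auto intro!: exI[of _ "\<lambda>z. Pav (T f) (z, 0)"])
  qed
  have partB: "T f \<in> L2zero" if fZ: "f \<in> L2zero" for f
  proof -
    have fL: "f \<in> L2H" using fZ by (simp add: L2zero_def)
    have fint: "AE z in lborel. (LINT t:{0..pi}|lborel. f (z, t)) = 0" using fZ by (simp add: L2zero_def)
    note ff = L2H_facts[OF fL]
    have TfL: "T f \<in> L2H" by (rule TL[OF fL])
    note Tff = L2H_facts[OF TfL]
    have Pf0: "AE p in lborel. Pav f p = 0"
      using AE_fst[OF fint] by eventually_elim (simp add: Pav_def)
    have key: "Q (Pav (T f)) \<le> ennreal (8 * C * e)" if e: "0 < e" for e
    proof -
      obtain F where F: "Dapx F" "Q (\<lambda>p. f p - F p) < ennreal e"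
        using density[OF ff(1,2) e] by blast
      obtain c u f' where cuf: "Kz u" "E0alg f'" "F = (\<lambda>p. chi c p * (u (fst p) + f' p))"
        using Dapx_parts[OF F(1)] by blast
      define G where "G p = chi c p * f' p" for p
      have GC: "G \<in> Cc_inf"
        using Cc_of[OF Kz_const[of 0] cuf(2), of c] by (simp add: G_def[abs_def])
      have GL: "G \<in> L2H" by (rule Cc_L2H[OF GC])
      note Gf = L2H_facts[OF GL]
      have FK: "Kalg F" by (rule Dapx_Kalg[OF F(1)])
      have Fm: "F \<in> borel_measurable lborel" by (rule Kalg_meas[OF FK])
      have Ffib: "fibint F" by (intro fibint_all Kalg_fibre_int[OF FK])
      have PF: "Pav F p = F p - G p" for p
        unfolding Pav_F[OF cuf(1,2), of c p, folded cuf(3)] by (simp add: cuf(3) G_def algebra_simps)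
      have QFG: "Q (\<lambda>p. F p - G p) \<le> ennreal e"
      proof -
        have a2: "AE p in lborel. Pav (\<lambda>p. F p - f p) p = Pav F p - Pav f p" by (rule Pav_diff[OF Ffib ff(3)])
        have "Q (\<lambda>p. F p - G p) = Q (Pav (\<lambda>p. F p - f p))"
          by (rule Q_cong_AE) (use a2 Pf0 in \<open>eventually_elim, simp add: PF\<close>)
        also have "\<dots> \<le> Q (\<lambda>p. F p - f p)" by (rule Pav_contr) (use ff(1) Fm in measurable)
        also have "\<dots> = Q (\<lambda>p. f p - F p)" by (rule Q_commute)
        also have "\<dots> \<le> ennreal e" using F(2) by simp
        finally show ?thesis .
      qed
      have QfG: "Q (\<lambda>p. f p - G p) \<le> ennreal (2 * e + 2 * e)"
      proof -
        have "Q (\<lambda>p. f p - G p) \<le> 2 * Q (\<lambda>p. f p - F p) + 2 * Q (\<lambda>p. F p - G p)"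
          by (rule Q_tri[OF ff(1) Fm Gf(1)])
        also have "\<dots> \<le> ennreal (2 * e + 2 * e)"
          by (rule ennreal_2sum[OF _ QFG]) (use F(2) e in auto)
        finally show ?thesis .
      qed
      define X where "X = xray a b G"
      have TGX: "ae_eq (T G) X" unfolding X_def by (rule agree[OF GC])
      have Xprop: "set_integrable lborel {0..pi} (\<lambda>t. X (z, t)) \<and> (LINT t:{0..pi}|lborel. X (z, t)) = 0" for z
        unfolding X_def G_def by (rule xray_E0[OF cuf(2)])
      have PX: "Pav X p = 0" for p using Xprop[of "fst p"] by (simp add: Pav_def)
      have Xfib: "(\<lambda>s. indicator {0..pi} s *\<^sub>R X (z, s)) \<in> borel_measurable lborel" for z
        using Xprop[of z] unfolding set_integrable_def by auto
      have TGm: "T G \<in> borel_measurable lborel" using L2H_facts[OF TL[OF GL]] by simp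
      have PTG: "AE p in lborel. Pav (T G) p = Pav X p"
        by (rule Pav_AE_fib[OF fib_meas[OF TGm] Xfib]) (use TGX in \<open>simp add: ae_eq_def\<close>)
      have TfTG: "Q (\<lambda>p. T f p - T G p) \<le> ennreal (C * (2 * e + 2 * e))"
        by (rule Tbound[OF fL GL QfG]) (use e in simp)
      have "Q (\<lambda>p. Pav (T f) p - Pav (T G) p) = Q (Pav (\<lambda>p. T f p - T G p))"
        by (rule Q_cong_AE) (use Pav_diff[OF Tff(3) L2H_facts(3)[OF TL[OF GL]]] in \<open>auto elim!: eventually_mono\<close>)
      also have "\<dots> \<le> Q (\<lambda>p. T f p - T G p)" by (rule Pav_contr) (use TGm Tff(1) in measurable)
      finally have A1: "Q (\<lambda>p. Pav (T f) p - Pav (T G) p) \<le> ennreal (C * (2 * e + 2 * e))" using TfTG by simp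
      have A2: "Q (\<lambda>p. Pav (T G) p - 0) \<le> ennreal 0"
      proof -
        have "Q (\<lambda>p. Pav (T G) p - 0) = Q (\<lambda>p. 0)"
          by (rule Q_cong_AE) (use PTG in \<open>auto elim!: eventually_mono simp: PX\<close>)
        then show ?thesis by (simp add: Q_def)
      qed
      have "Q (Pav (T f)) = Q (\<lambda>p. Pav (T f) p - 0)" by simp
      also have "\<dots> \<le> 2 * Q (\<lambda>p. Pav (T f) p - Pav (T G) p) + 2 * Q (\<lambda>p. Pav (T G) p - 0)"
        by (rule Q_tri[OF Pav_meas[OF Tff(1)] Pav_meas[OF TGm]]) simp
      also have "\<dots> \<le> ennreal (2 * (C * (2 * e + 2 * e)) + 2 * 0)"
        by (rule ennreal_2sum[OF A1 A2]) (use C0 e in auto)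
      finally show ?thesis by (simp add: algebra_simps)
    qed
    have "Q (Pav (T f)) = 0"
      by (rule eps_zero[of _ "8 * C"]) (use key C0 in auto)
    then have "AE p in lborel. p \<in> fdom \<longrightarrow> Pav (T f) p = 0"
      by (subst (asm) Q_zero_iff) (use Pav_meas[OF Tff(1)] in auto)
    then have "AE p in lborel. p \<in> fdom \<longrightarrow> Pav (T f) (fst p, 0) = 0"
      by eventually_elim (simp add: Pav_def)
    then have "AE z in lborel. Pav (T f) (z, 0) = 0"
      by (rule AE_fst_back[where P="\<lambda>z. Pav (T f) (z, 0) = 0"])
    then have "AE z in lborel. (LINT t:{0..pi}|lborel. T f (z, t)) = 0"
      by eventually_elim (simp add: Pav_def)
    then show "T f \<in> L2zero" using TfL unfolding L2zero_def by auto
  qed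
  show ?thesis using partA partB by blast
qed


end
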